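(* Let $f\in\mathrm{AC}^1$. If $n_j$ is an odd sequence then \[ \lim_{j\to\infty} n_j\,\big\|B_{n_j}(f)-f-O(f)/D_{n_j}\big\|_\infty=0, \] and if $n_j$ is an even sequence then \[ \lim_{j\to\infty} n_j\,\big\|B_{n_j}(f)-f-E(f)/D_{n_j}\big\|_\infty=0. \]
   Context: Nodes: $x_{k,n}:=2k/n-1$, $k=0,\dots,n$. $B_n(f,x):=N_n(f,x)/D_n(x)$ for $x$ not a node, $B_n(f,x_{k,n}):=f(x_{k,n})$, where $N_n(f,x)=\sum_{k=0}^n(-1)^k\frac{f(x_{k,n})}{x-x_{k,n}}$ and $D_n(x)=\sum_{k=0}^n(-1)^k\frac{1}{x-x_{k,n}}$. $\mathrm{AC}^1$: functions $f:[-1,1]\to\mathbb{R}$ differentiable at every point of $[-1,1]$ (one-sided at $\pm1$) with $f'$ absolutely continuous. A sequence $n_j$ is a strictly increasing map $\mathbb{N}\to\mathbb{N}$; odd/even if all $n_j$ are odd/even. For $x\in(-1,1)$, $O(f,x):=\frac{f(x)-f(1)}{2(x-1)}-\frac{f(x)-f(-1)}{2(x+1)}$ and $E(f,x):=\frac{f(1)-f(x)}{2(x-1)}+\frac{f(-1)-f(x)}{2(x+1)}$. The sup norm is taken over the points $x\in(-1,1)$ that are not nodes $x_{k,n_j}$ (at the nodes the expressions extend continuously by $0$). *)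

theory Defs
  imports "HOL-Analysis.Analysis"
begin

definition node :: "nat \<Rightarrow> nat \<Rightarrow> real" where
  "node n k = 2 * real k / real n - 1"

definition Nn :: "nat \<Rightarrow> (real \<Rightarrow> real) \<Rightarrow> real \<Rightarrow> real" where
  "Nn n f x = (\<Sum>k=0..n. (-1) ^ k * f (node n k) / (x - node n k))"

definition Dn :: "nat \<Rightarrow> real \<Rightarrow> real" where
  "Dn n x = (\<Sum>k=0..n. (-1) ^ k / (x - node n k))"

definition Bn :: "nat \<Rightarrow> (real \<Rightarrow> real) \<Rightarrow> real \<Rightarrow> real" where
  "Bn n f x = (if (\<exists>k\<le>n. x = node n k) then f x else Nn n f x / Dn n x)"

definition abs_cont_on :: "real set \<Rightarrow> (real \<Rightarrow> real) \<Rightarrow> bool" where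
  "abs_cont_on S g \<longleftrightarrow>
     (\<forall>\<epsilon>>0. \<exists>\<delta>>0. \<forall>(m::nat) (a::nat \<Rightarrow> real) b.
        (\<forall>i<m. a i \<le> b i \<and> {a i..b i} \<subseteq> S) \<longrightarrow>
        (\<forall>i<m. \<forall>j<m. i \<noteq> j \<longrightarrow> b i \<le> a j \<or> b j \<le> a i) \<longrightarrow>
        (\<Sum>i<m. b i - a i) < \<delta> \<longrightarrow>
        (\<Sum>i<m. \<bar>g (b i) - g (a i)\<bar>) < \<epsilon>)"

definition AC1 :: "(real \<Rightarrow> real) \<Rightarrow> bool" where
  "AC1 f \<longleftrightarrow> (\<exists>f'. (\<forall>x\<in>{-1..1}. (f has_real_derivative f' x) (at x within {-1..1}))
                     \<and> abs_cont_on {-1..1} f')"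

definition Ofun :: "(real \<Rightarrow> real) \<Rightarrow> real \<Rightarrow> real" where
  "Ofun f x = (f x - f 1) / (2 * (x - 1)) - (f x - f (-1)) / (2 * (x + 1))"

definition Efun :: "(real \<Rightarrow> real) \<Rightarrow> real \<Rightarrow> real" where
  "Efun f x = (f 1 - f x) / (2 * (x - 1)) + (f (-1) - f x) / (2 * (x + 1))"

definition supnorm :: "nat \<Rightarrow> (real \<Rightarrow> real) \<Rightarrow> ereal" where
  "supnorm n g = (SUP x\<in>{x. -1 < x \<and> x < 1 \<and> (\<forall>k\<le>n. x \<noteq> node n k)}. ereal \<bar>g x\<bar>)"

end

theory Submission
  imports Defs
begin

definition acp :: "(real \<Rightarrow> real) \<Rightarrow> real \<Rightarrow> real \<Rightarrow> bool" where
  "acp F \<eta> \<epsilon> \<longleftrightarrow> (\<forall>(m::nat) (a::nat \<Rightarrow> real) b.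
        (\<forall>i<m. a i \<le> b i \<and> {a i..b i} \<subseteq> {-1..1}) \<longrightarrow>
        (\<forall>i<m. \<forall>j<m. i \<noteq> j \<longrightarrow> b i \<le> a j \<or> b j \<le> a i) \<longrightarrow>
        (\<Sum>i<m. b i - a i) < \<eta> \<longrightarrow>
        (\<Sum>i<m. \<bar>F (b i) - F (a i)\<bar>) < \<epsilon>)"

lemma ac_acp:
  assumes "abs_cont_on {-1..1} F" "\<epsilon> > 0"
  shows "\<exists>\<eta>>0. acp F \<eta> \<epsilon>"
  using assms unfolding abs_cont_on_def acp_def by blast

lemma acp_family:
  assumes "acp F \<eta> \<epsilon>" "finite I"
    and "\<forall>i\<in>I. -1 \<le> \<alpha> i \<and> \<alpha> i \<le> \<beta> i \<and> \<beta> i \<le> 1"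
    and "\<forall>i\<in>I. \<forall>i'\<in>I. i \<noteq> i' \<longrightarrow> \<beta> i \<le> \<alpha> i' \<or> \<beta> i' \<le> \<alpha> i"
    and "(\<Sum>i\<in>I. \<beta> i - \<alpha> i) < \<eta>"
  shows "(\<Sum>i\<in>I. \<bar>F (\<beta> i) - F (\<alpha> i)\<bar>) < \<epsilon>"
proof -
  obtain h where h: "bij_betw h {0..<card I} I"
    using ex_bij_betw_nat_finite[OF assms(2)] by blast
  have hI: "h i \<in> I" if "i < card I" for i
    using h that by (auto simp: bij_betw_def)
  have inj: "h i \<noteq> h j" if "i < card I" "j < card I" "i \<noteq> j" for i j
    using h that by (auto simp: bij_betw_def inj_on_def)
  have s1: "(\<Sum>i<card I. \<beta> (h i) - \<alpha> (h i)) = (\<Sum>i\<in>I. \<beta> i - \<alpha> i)"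
    using sum.reindex_bij_betw[OF h, of "\<lambda>i. \<beta> i - \<alpha> i"] by (simp add: atLeast0LessThan)
  have s2: "(\<Sum>i<card I. \<bar>F (\<beta> (h i)) - F (\<alpha> (h i))\<bar>) = (\<Sum>i\<in>I. \<bar>F (\<beta> i) - F (\<alpha> i)\<bar>)"
    using sum.reindex_bij_betw[OF h, of "\<lambda>i. \<bar>F (\<beta> i) - F (\<alpha> i)\<bar>"] by (simp add: atLeast0LessThan)
  have "(\<Sum>i<card I. \<bar>F (\<beta> (h i)) - F (\<alpha> (h i))\<bar>) < \<epsilon>"
  proof -
    note P = assms(1)[unfolded acp_def, THEN spec[of _ "card I"], THEN spec[of _ "\<lambda>i. \<alpha> (h i)"],
       THEN spec[of _ "\<lambda>i. \<beta> (h i)"]]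
    show ?thesis
    proof (rule P[rule_format])
      fix i assume "i < card I" then show "\<alpha> (h i) \<le> \<beta> (h i) \<and> {\<alpha> (h i)..\<beta> (h i)} \<subseteq> {-1..1}"
        using hI assms(3) by fastforce
    next
      fix i j assume "i < card I" "j < card I" "i \<noteq> j"
      then show "\<beta> (h i) \<le> \<alpha> (h j) \<or> \<beta> (h j) \<le> \<alpha> (h i)"
        using hI inj assms(4) by blast
    next
      show "(\<Sum>i<card I. \<beta> (h i) - \<alpha> (h i)) < \<eta>" using s1 assms(5) by simp
    qed
  qed
  then show ?thesis using s2 by simp
qed

definition xg :: "(real \<Rightarrow> real) \<Rightarrow> nat \<Rightarrow> nat \<Rightarrow> real" where
  "xg F N j = F (node N (Suc j)) - F (node N j)"

lemma node_mono: "N > 0 \<Longrightarrow> i \<le> j \<Longrightarrow> node N i \<le> node N j"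
  unfolding node_def by (simp add: divide_right_mono)

lemma node_0[simp]: "N > 0 \<Longrightarrow> node N 0 = -1" unfolding node_def by simp
lemma node_N[simp]: "N > 0 \<Longrightarrow> node N N = 1" unfolding node_def by simp

lemma node_range: "N > 0 \<Longrightarrow> j \<le> N \<Longrightarrow> -1 \<le> node N j \<and> node N j \<le> 1"
  using node_mono[of N 0 j] node_mono[of N j N] by simp

lemma node_Suc: "N > 0 \<Longrightarrow> node N (Suc j) - node N j = 2 / N"
  unfolding node_def by (simp add: field_simps)

lemma node_fine: "N0 > 0 \<Longrightarrow> M > 0 \<Longrightarrow> node (N0*M) (i*M + r) = node N0 i + r * (2 / (N0*M))"
  unfolding node_def by (simp add: field_simps)

lemma node_fine0: "N0 > 0 \<Longrightarrow> M > 0 \<Longrightarrow> node (N0*M) (i*M) = node N0 i"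
  using node_fine[of N0 M i 0] by simp

lemma telesc: "(\<Sum>r<M. g (Suc r) - g r) = g M - (g 0 :: real)"
  by (induction M) auto

lemma xg_tele: "N0 > 0 \<Longrightarrow> M > 0 \<Longrightarrow> (\<Sum>r<M. xg F (N0*M) (i*M + r)) = xg F N0 i"
proof -
  assume a: "N0 > 0" "M > 0"
  have "(\<Sum>r<M. xg F (N0*M) (i*M + r)) = (\<Sum>r<M. F (node (N0*M) (i*M + Suc r)) - F (node (N0*M) (i*M + r)))"
    by (simp add: xg_def)
  also have "\<dots> = F (node (N0*M) (i*M + M)) - F (node (N0*M) (i*M + 0))"
    by (rule telesc[where g="\<lambda>r. F (node (N0*M) (i*M + r))"])
  also have "i*M + M = Suc i * M" by simp
  also have "F (node (N0*M) (Suc i * M)) - F (node (N0*M) (i*M + 0)) = xg F N0 i"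
    using node_fine0[OF a, of "Suc i"] node_fine0[OF a, of i] by (simp add: xg_def)
  finally show ?thesis .
qed

lemma sum_lessThan_add: "(\<Sum>j<(a::nat)+(b::nat). g j) = (\<Sum>j<a. g j) + (\<Sum>r<b. g (a + r) :: real)"
  by (induction b) (auto simp: add.assoc)

lemma sum_split_mult: "(\<Sum>j<(N0::nat)*M. g j) = (\<Sum>i<N0. \<Sum>r<M. g (i*M + r) :: real)"
proof (induction N0)
  case 0 then show ?case by simp
next
  case (Suc n)
  have "(\<Sum>j<Suc n * M. g j) = (\<Sum>j<n*M + M. g j)" by (simp add: add.commute)
  also have "\<dots> = (\<Sum>j<n*M. g j) + (\<Sum>r<M. g (n*M + r))" by (rule sum_lessThan_add)
  finally show ?case using Suc by simp
qed

lemma node_disj: "N > 0 \<Longrightarrow> (i::nat) \<noteq> i' \<Longrightarrow> node N (Suc i) \<le> node N i' \<or> node N (Suc i') \<le> node N i"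
proof -
  assume N: "N > 0" and ne: "i \<noteq> i'"
  then consider "Suc i \<le> i'" | "Suc i' \<le> i" by linarith
  then show ?thesis using node_mono[OF N] by cases auto
qed

lemma acp_grid:
  assumes "acp F \<eta> \<epsilon>" "N > 0" "H \<subseteq> {..<N}" "real (card H) * (2/N) < \<eta>"
  shows "(\<Sum>j\<in>H. \<bar>xg F N j\<bar>) < \<epsilon>"
proof -
  have fin: "finite H" using assms(3) finite_subset by blast
  have "(\<Sum>j\<in>H. \<bar>F (node N (Suc j)) - F (node N j)\<bar>) < \<epsilon>"
  proof (rule acp_family[OF assms(1) fin])
    show "\<forall>i\<in>H. - 1 \<le> node N i \<and> node N i \<le> node N (Suc i) \<and> node N (Suc i) \<le> 1"
      using assms(2,3) node_range[OF assms(2)] node_mono[OF assms(2)] by (auto simp: subset_iff)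
    show "\<forall>i\<in>H. \<forall>i'\<in>H. i \<noteq> i' \<longrightarrow> node N (Suc i) \<le> node N i' \<or> node N (Suc i') \<le> node N i"
      using node_disj[OF assms(2)] by blast
    have "(\<Sum>i\<in>H. node N (Suc i) - node N i) = real (card H) * (2/N)"
      using node_Suc[OF assms(2)] by simp
    then show "(\<Sum>i\<in>H. node N (Suc i) - node N i) < \<eta>" using assms(4) by simp
  qed
  then show ?thesis by (simp add: xg_def)
qed

lemma acp_fine:
  assumes "acp F \<eta> \<epsilon>" "N0 > 0" "M > 0" "H \<subseteq> {..<N0}" "real (card H) * (2/N0) < \<eta>"
  shows "(\<Sum>i\<in>H. \<Sum>r<M. \<bar>xg F (N0*M) (i*M + r)\<bar>) < \<epsilon>"
proof -
  have fin: "finite H" using assms(4) finite_subset by blast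
  define N where "N = N0*M"
  have N: "N > 0" using assms by (simp add: N_def)
  let ?j = "\<lambda>p::nat\<times>nat. fst p * M + snd p"
  have jlt: "?j p < N" if "p \<in> H \<times> {..<M}" for p
  proof -
    have "fst p < N0" "snd p < M" using that assms(4) by auto
    then have "fst p * M + snd p < (fst p + 1) * M" by simp
    also have "\<dots> \<le> N0 * M" using \<open>fst p < N0\<close> by (intro mult_right_mono) auto
    finally show ?thesis by (simp add: N_def)
  qed
  have jinj: "?j p \<noteq> ?j q" if "p \<in> H \<times> {..<M}" "q \<in> H \<times> {..<M}" "p \<noteq> q" for p q
  proof
    assume e: "?j p = ?j q"
    have "snd p < M" "snd q < M" using that by auto
    then have "?j p div M = fst p" "?j q div M = fst q" "?j p mod M = snd p" "?j q mod M = snd q"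
      by auto
    then show False using e that(3) by (metis prod.expand)
  qed
  have "(\<Sum>p\<in>H \<times> {..<M}. \<bar>F (node N (Suc (?j p))) - F (node N (?j p))\<bar>) < \<epsilon>"
  proof (rule acp_family[OF assms(1)])
    show "finite (H \<times> {..<M})" using fin by simp
    show "\<forall>i\<in>H \<times> {..<M}. - 1 \<le> node N (?j i) \<and> node N (?j i) \<le> node N (Suc (?j i)) \<and> node N (Suc (?j i)) \<le> 1"
    proof
      fix p assume p: "p \<in> H \<times> {..<M}"
      have "Suc (?j p) \<le> N" using jlt[OF p] by simp
      then show "- 1 \<le> node N (?j p) \<and> node N (?j p) \<le> node N (Suc (?j p)) \<and> node N (Suc (?j p)) \<le> 1"
        using node_range[OF N, of "?j p"] node_range[OF N, of "Suc (?j p)"] node_mono[OF N, of "?j p" "Suc (?j p)"]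
        by simp
    qed
    show "\<forall>i\<in>H \<times> {..<M}. \<forall>i'\<in>H \<times> {..<M}. i \<noteq> i' \<longrightarrow> node N (Suc (?j i)) \<le> node N (?j i') \<or> node N (Suc (?j i')) \<le> node N (?j i)"
      using jinj node_disj[OF N] by blast
    have "(\<Sum>p\<in>H \<times> {..<M}. node N (Suc (?j p)) - node N (?j p)) = real (card H) * real M * (2/N)"
      using node_Suc[OF N] by (simp add: card_cartesian_product)
    also have "\<dots> = real (card H) * (2/N0)" using assms(3) by (simp add: N_def)
    finally show "(\<Sum>p\<in>H \<times> {..<M}. node N (Suc (?j p)) - node N (?j p)) < \<eta>" using assms(5) by simp
  qed
  then show ?thesis
    by (simp add: sum.cartesian_product xg_def N_def case_prod_unfold)
qed

lemma heavy_count: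
  assumes "acp F \<eta> \<epsilon>" "N > 0" "2/N \<le> \<eta>/2" "K * \<eta> \<ge> 2*\<epsilon>" "K > 0" "\<eta> > 0"
    and "H \<subseteq> {j. j < N \<and> \<bar>xg F N j\<bar> > K * (2/N)}"
  shows "real (card H) * (2/N) < \<eta>"
proof (rule ccontr)
  assume c: "\<not> real (card H) * (2/N) < \<eta>"
  define l where "l = 2 / real N"
  have l: "l > 0" using assms(2) by (simp add: l_def)
  define c where "c = nat \<lceil>\<eta> / (2*l)\<rceil>"
  have c1: "real c \<ge> \<eta> / (2*l)" unfolding c_def by linarith
  have pos: "\<eta> / (2*l) > 0" using l assms(6) by simp
  have c2: "real c < \<eta> / (2*l) + 1"
  proof -
    have "real c = real_of_int \<lceil>\<eta> / (2*l)\<rceil>" unfolding c_def using pos by simp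
    then show ?thesis using ceiling_correct[of "\<eta> / (2*l)"] by linarith
  qed
  have "real c * l < \<eta>/2 + l" using c2 l by (simp add: field_simps)
  also have "\<dots> \<le> \<eta>" using assms(3) by (simp add: l_def)
  finally have cl: "real c * l < \<eta>" .
  have "real (card H) \<ge> \<eta> / l" using c l by (simp add: l_def field_simps)
  moreover have "\<eta> / (2*l) \<le> \<eta> / l" using l assms(6) by (simp add: divide_left_mono)
  ultimately have "\<eta> / (2*l) \<le> real (card H)" by linarith
  then have "\<lceil>\<eta> / (2*l)\<rceil> \<le> int (card H)" using ceiling_le_iff[of "\<eta>/(2*l)" "int (card H)"] by simp
  then have "c \<le> card H" unfolding c_def using nat_mono by fastforce
  then obtain H' where H': "H' \<subseteq> H" "card H' = c" using obtain_subset_with_card_n by metis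
  have HN: "H' \<subseteq> {..<N}" using H' assms(7) by auto
  have "(\<Sum>j\<in>H'. \<bar>xg F N j\<bar>) < \<epsilon>"
    by (rule acp_grid[OF assms(1,2) HN]) (use H' cl in \<open>simp add: l_def\<close>)
  moreover have "(\<Sum>j\<in>H'. \<bar>xg F N j\<bar>) \<ge> (\<Sum>j\<in>H'. K * l)"
    using H' assms(7) by (intro sum_mono) (auto simp: l_def)
  moreover have "(\<Sum>j\<in>H'. K * l) = real c * K * l" using H' by simp
  moreover have "real c * K * l \<ge> \<eta> / (2*l) * K * l"
    using c1 assms(5) l by (intro mult_right_mono) auto
  moreover have "\<eta> / (2*l) * K * l = K * \<eta> / 2" using l by (simp add: field_simps)
  ultimately show False using assms(4) by linarith
qed

definition Phi :: "real \<Rightarrow> real \<Rightarrow> real" where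
  "Phi K y = (if \<bar>y\<bar> \<le> K then y\<^sup>2 else 2*K*\<bar>y\<bar> - K\<^sup>2)"

definition dPhi :: "real \<Rightarrow> real \<Rightarrow> real" where
  "dPhi K s = 2 * max (-K) (min K s)"

definition Dv :: "real \<Rightarrow> real \<Rightarrow> real \<Rightarrow> real" where
  "Dv K y s = Phi K y - Phi K s - dPhi K s * (y - s)"

lemma Phi_light: "\<bar>s\<bar> \<le> K \<Longrightarrow> Phi K s = s\<^sup>2" by (simp add: Phi_def)
lemma dPhi_light: "\<bar>s\<bar> \<le> K \<Longrightarrow> dPhi K s = 2 * s" by (simp add: dPhi_def)

lemma Dv_nonneg:
  assumes K: "K > 0" shows "Dv K y s \<ge> 0"
proof -
  have sq: "(a::real)\<^sup>2 \<ge> 0" for a by simp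
  consider "\<bar>s\<bar> \<le> K" | "s > K" | "s < -K" by linarith
  then show ?thesis
  proof cases
    case 1
    then have e: "Dv K y s = Phi K y - 2 * s*y + s\<^sup>2"
      by (simp add: Dv_def Phi_light dPhi_light power2_eq_square algebra_simps)
    consider "\<bar>y\<bar> \<le> K" | "y > K" | "y < -K" by linarith
    then show ?thesis
    proof cases
      case 1 then show ?thesis using e sq[of "y-s"] by (simp add: Phi_def power2_eq_square algebra_simps)
    next
      case 2
      then have "\<bar>y\<bar> = y" "\<not> \<bar>y\<bar> \<le> K" using K by auto
      then have "Phi K y - 2 * s*y + s\<^sup>2 = (K-s)\<^sup>2 + 2*(K-s)*(y-K)"
        by (simp add: Phi_def power2_eq_square algebra_simps)
      moreover have "2*(K-s)*(y-K) \<ge> 0" using 2 \<open>\<bar>s\<bar> \<le> K\<close> by simp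
      ultimately show ?thesis using e sq[of "K-s"] by linarith
    next
      case 3
      then have "\<bar>y\<bar> = -y" "\<not> \<bar>y\<bar> \<le> K" using K by auto
      then have "Phi K y - 2 * s*y + s\<^sup>2 = (K+s)\<^sup>2 + 2*(K+s)*(-y-K)"
        by (simp add: Phi_def power2_eq_square algebra_simps)
      moreover have "2*(K+s)*(-y-K) \<ge> 0" using 3 \<open>\<bar>s\<bar> \<le> K\<close> by simp
      ultimately show ?thesis using e sq[of "K+s"] by linarith
    qed
  next
    case 2
    then have e: "Dv K y s = Phi K y - 2*K*y + K\<^sup>2"
      using K by (simp add: Dv_def Phi_def dPhi_def power2_eq_square algebra_simps)
    show ?thesis
    proof (cases "\<bar>y\<bar> \<le> K")
      case True
      then have "Phi K y - 2*K*y + K\<^sup>2 = (y-K)\<^sup>2" by (simp add: Phi_def power2_eq_square algebra_simps)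
      then show ?thesis using e sq[of "y-K"] by linarith
    next
      case False
      then have "Phi K y - 2*K*y + K\<^sup>2 = 2*K*(\<bar>y\<bar> - y)" by (simp add: Phi_def algebra_simps)
      moreover have "2*K*(\<bar>y\<bar> - y) \<ge> 0" using K by simp
      ultimately show ?thesis using e by linarith
    qed
  next
    case 3
    then have e: "Dv K y s = Phi K y + 2*K*y + K\<^sup>2"
      using K by (simp add: Dv_def Phi_def dPhi_def power2_eq_square algebra_simps)
    show ?thesis
    proof (cases "\<bar>y\<bar> \<le> K")
      case True
      then have "Phi K y + 2*K*y + K\<^sup>2 = (y+K)\<^sup>2" by (simp add: Phi_def power2_eq_square algebra_simps)
      then show ?thesis using e sq[of "y+K"] by linarith
    next
      case False
      then have "Phi K y + 2*K*y + K\<^sup>2 = 2*K*(\<bar>y\<bar> + y)" by (simp add: Phi_def algebra_simps)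
      moreover have "2*K*(\<bar>y\<bar> + y) \<ge> 0" using K by simp
      ultimately show ?thesis using e by linarith
    qed
  qed
qed

lemma Phi_le_light: "\<bar>y\<bar> \<le> K \<Longrightarrow> Phi K y \<le> K\<^sup>2"
  by (simp add: Phi_def) (metis abs_ge_zero power2_abs power_mono)

lemma Phi_le_abs: "K > 0 \<Longrightarrow> Phi K y \<le> 2*K*\<bar>y\<bar>"
proof -
  assume K: "K > 0"
  show ?thesis
  proof (cases "\<bar>y\<bar> \<le> K")
    case True
    have "y\<^sup>2 = \<bar>y\<bar> * \<bar>y\<bar>" by (simp add: power2_eq_square)
    also have "\<dots> \<le> K * \<bar>y\<bar>" using True by (intro mult_right_mono) auto
    finally have "y\<^sup>2 \<le> K * \<bar>y\<bar>" .
    moreover have "K * \<bar>y\<bar> \<le> 2 * K * \<bar>y\<bar>" using K by simp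
    moreover have "Phi K y = y\<^sup>2" using True by (simp add: Phi_def)
    ultimately show ?thesis by linarith
  next
    case False then show ?thesis by (simp add: Phi_def)
  qed
qed

lemma Phi_nonneg: "K > 0 \<Longrightarrow> Phi K y \<ge> 0"
proof -
  assume K: "K > 0"
  show ?thesis
  proof (cases "\<bar>y\<bar> \<le> K")
    case False
    then have "K * K \<le> K * \<bar>y\<bar>" using K by simp
    then show ?thesis using False K by (simp add: Phi_def power2_eq_square)
  qed (simp add: Phi_def)
qed

lemma Dv_bound:
  assumes K: "K > 0" and t: "\<tau> > 0" and s: "\<bar>s\<bar> \<le> K/2"
  shows "\<bar>y - s\<bar> \<le> \<tau>/2 + Dv K y s / (2*\<tau>) + 6 * Dv K y s / K"
proof -
  have D0: "Dv K y s \<ge> 0" by (rule Dv_nonneg[OF K])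
  have sK: "\<bar>s\<bar> \<le> K" using s K by simp
  have e: "Dv K y s = Phi K y - 2 * s*y + s\<^sup>2"
    using sK by (simp add: Dv_def Phi_light dPhi_light power2_eq_square algebra_simps)
  have A: "0 \<le> \<tau>/2 + Dv K y s / (2*\<tau>)" using D0 t by simp
  have B: "0 \<le> 6 * Dv K y s / K" using D0 K by simp
  consider "\<bar>y\<bar> \<le> K" | "y > K" | "y < -K" by linarith
  then show ?thesis
  proof cases
    case 1
    then have D: "Dv K y s = (y - s)\<^sup>2" using e by (simp add: Phi_def power2_eq_square algebra_simps)
    have "(\<bar>y - s\<bar> - \<tau>)\<^sup>2 \<ge> 0" by simp
    then have "2*\<tau>*\<bar>y - s\<bar> \<le> \<tau>\<^sup>2 + (y-s)\<^sup>2" by (simp add: power2_eq_square algebra_simps)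
    then have "\<bar>y - s\<bar> \<le> \<tau>/2 + (y-s)\<^sup>2 / (2*\<tau>)" using t by (simp add: field_simps power2_eq_square)
    moreover have "Dv K y s / (2*\<tau>) = (y-s)\<^sup>2 / (2*\<tau>)" using D by simp
    ultimately show ?thesis using B by linarith
  next
    case 2
    then have "\<bar>y\<bar> = y" "\<not> \<bar>y\<bar> \<le> K" using K by auto
    then have D: "Dv K y s = (K-s)\<^sup>2 + 2*(K-s)*(y-K)" using e by (simp add: Phi_def power2_eq_square algebra_simps)
    have "K - s \<ge> K/2" using s by simp
    then have "(K-s)\<^sup>2 \<ge> (K/2)\<^sup>2" using K by (intro power_mono) auto
    moreover have "2*(K-s)*(y-K) \<ge> 2*(K/2)*(y-K)" using \<open>K - s \<ge> K/2\<close> 2 by (intro mult_right_mono) auto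
    ultimately have "Dv K y s \<ge> K\<^sup>2/4 + K*(y-K)" using D by (simp add: power2_eq_square)
    then have "6 * Dv K y s / K \<ge> 6 * (K\<^sup>2/4 + K*(y-K)) / K" using K by (simp add: divide_right_mono)
    also have "6 * (K\<^sup>2/4 + K*(y-K)) / K = 3*K/2 + 6*(y-K)" using K by (simp add: field_simps power2_eq_square)
    finally have "6 * Dv K y s / K \<ge> \<bar>y - s\<bar>" using 2 s K by (simp add: abs_le_iff)
    then show ?thesis using A by linarith
  next
    case 3
    then have "\<bar>y\<bar> = -y" "\<not> \<bar>y\<bar> \<le> K" using K by auto
    then have D: "Dv K y s = (K+s)\<^sup>2 + 2*(K+s)*(-y-K)" using e by (simp add: Phi_def power2_eq_square algebra_simps)
    have "K + s \<ge> K/2" using s by simp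
    then have "(K+s)\<^sup>2 \<ge> (K/2)\<^sup>2" using K by (intro power_mono) auto
    moreover have "2*(K+s)*(-y-K) \<ge> 2*(K/2)*(-y-K)" using \<open>K + s \<ge> K/2\<close> 3 by (intro mult_right_mono) auto
    ultimately have "Dv K y s \<ge> K\<^sup>2/4 + K*(-y-K)" using D by (simp add: power2_eq_square)
    then have "6 * Dv K y s / K \<ge> 6 * (K\<^sup>2/4 + K*(-y-K)) / K" using K by (simp add: divide_right_mono)
    also have "6 * (K\<^sup>2/4 + K*(-y-K)) / K = 3*K/2 + 6*(-y-K)" using K by (simp add: field_simps power2_eq_square)
    finally have "6 * Dv K y s / K \<ge> \<bar>y - s\<bar>" using 3 s K by (simp add: abs_le_iff)
    then show ?thesis using A by linarith
  qed
qed

definition en :: "real \<Rightarrow> nat \<Rightarrow> (real \<Rightarrow> real) \<Rightarrow> real" where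
  "en K N F = (\<Sum>j<N. (2/N) * Phi K (xg F N j / (2/N)))"

lemma sum_if_restrict:
  assumes "H \<subseteq> {..<(N::nat)}"
  shows "(\<Sum>j<N. (if j \<in> H then g j else 0)) = (\<Sum>j\<in>H. g j :: real)"
proof -
  have "(\<Sum>j<N. (if j \<in> H then g j else 0)) = sum g ({..<N} \<inter> H)"
    by (simp add: sum.inter_restrict)
  also have "{..<N} \<inter> H = H" using assms by auto
  finally show ?thesis .
qed

lemma en_bound:
  assumes ac: "acp F \<eta> \<epsilon>" and pos: "\<eta> > 0" "K > 0" and K\<eta>: "K * \<eta> \<ge> 2*\<epsilon>"
    and N: "N > 0" "2/N \<le> \<eta>/2"
  shows "en K N F \<le> 2*K\<^sup>2 + 2*K*\<epsilon>"
proof -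
  define l where "l = 2 / real N"
  have l: "l > 0" using N by (simp add: l_def)
  define H where "H = {j. j < N \<and> \<bar>xg F N j\<bar> > K * (2/N)}"
  have HN: "H \<subseteq> {..<N}" by (auto simp: H_def)
  have cH: "real (card H) * (2/N) < \<eta>"
    by (rule heavy_count[OF ac N(1) N(2) K\<eta> pos(2) pos(1)]) (simp add: H_def)
  have sH: "(\<Sum>j\<in>H. \<bar>xg F N j\<bar>) < \<epsilon>" by (rule acp_grid[OF ac N(1) HN cH])
  have pw: "l * Phi K (xg F N j / l) \<le> l * K\<^sup>2 + (if j \<in> H then 2*K*\<bar>xg F N j\<bar> else 0)" if "j < N" for j
  proof (cases "j \<in> H")
    case True
    have "l * Phi K (xg F N j / l) \<le> l * (2*K*\<bar>xg F N j / l\<bar>)"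
      by (rule mult_left_mono[OF Phi_le_abs[OF pos(2)]]) (use l in simp)
    also have "\<dots> = 2*K*\<bar>xg F N j\<bar>" using l by (simp add: abs_div)
    finally show ?thesis using True l by (simp add: add_increasing)
  next
    case False
    then have "\<bar>xg F N j / l\<bar> \<le> K" using that l by (auto simp: H_def l_def abs_div abs_mult field_simps)
    then have "l * Phi K (xg F N j / l) \<le> l * K\<^sup>2" using Phi_le_light l by (intro mult_left_mono) auto
    then show ?thesis using False by simp
  qed
  have "en K N F = (\<Sum>j<N. l * Phi K (xg F N j / l))" by (simp add: en_def l_def)
  also have "\<dots> \<le> (\<Sum>j<N. l * K\<^sup>2 + (if j \<in> H then 2*K*\<bar>xg F N j\<bar> else 0))"
    by (rule sum_mono) (use pw in auto)
  also have "\<dots> = real N * l * K\<^sup>2 + (\<Sum>j\<in>H. 2*K*\<bar>xg F N j\<bar>)"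
    by (simp add: sum.distrib sum_if_restrict[OF HN])
  also have "real N * l = 2" using N by (simp add: l_def)
  also have "(\<Sum>j\<in>H. 2*K*\<bar>xg F N j\<bar>) = 2*K*(\<Sum>j\<in>H. \<bar>xg F N j\<bar>)" by (simp add: sum_distrib_left)
  also have "2*K*(\<Sum>j\<in>H. \<bar>xg F N j\<bar>) \<le> 2*K*\<epsilon>" using sH pos by simp
  finally show ?thesis by simp
qed

lemma sum_aff: "(\<Sum>r<M. A r - B - C*(x r - E)) = (\<Sum>r<M. A r) - real M * B - C * ((\<Sum>r<M. x r) - real M * (E::real))"
  by (induction M) (auto simp: algebra_simps)

lemma en_decomp:
  assumes N0: "N0 > 0" and M: "M > 0"
  shows "en K (N0*M) F - en K N0 F =
    (\<Sum>i<N0. \<Sum>r<M. (2/(N0*M)) * Dv K (xg F (N0*M) (i*M+r) / (2/(N0*M))) (xg F N0 i / (2/N0)))"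
proof -
  define l where "l = 2 / real N0"
  define lm where "lm = 2 / real (N0*M)"
  have l: "l > 0" using N0 by (simp add: l_def)
  have lam: "lm > 0" using N0 M by (simp add: lm_def)
  have Ml: "real M * lm = l" using M by (simp add: lm_def l_def)
  have per: "(\<Sum>r<M. lm * Dv K (xg F (N0*M) (i*M+r) / lm) (xg F N0 i / l))
      = (\<Sum>r<M. lm * Phi K (xg F (N0*M) (i*M+r) / lm)) - l * Phi K (xg F N0 i / l)" for i
  proof -
    let ?s = "xg F N0 i / l"
    have "(\<Sum>r<M. lm * Dv K (xg F (N0*M) (i*M+r) / lm) ?s)
       = (\<Sum>r<M. lm * Phi K (xg F (N0*M) (i*M+r) / lm) - lm * Phi K ?s - dPhi K ?s * (xg F (N0*M) (i*M+r) - lm * ?s))"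
      using lam by (intro sum.cong) (auto simp: Dv_def algebra_simps)
    also have "\<dots> = (\<Sum>r<M. lm * Phi K (xg F (N0*M) (i*M+r) / lm)) - real M * (lm * Phi K ?s)
        - dPhi K ?s * ((\<Sum>r<M. xg F (N0*M) (i*M+r)) - real M * (lm * ?s))"
      by (rule sum_aff)
    also have "real M * (lm * Phi K ?s) = real M * lm * Phi K ?s" by simp
    also have "real M * (lm * ?s) = real M * lm * ?s" by simp
    also have "(\<Sum>r<M. xg F (N0*M) (i*M+r)) = xg F N0 i" by (rule xg_tele[OF N0 M])
    also have "real M * lm * ?s = xg F N0 i" using Ml l by simp
    finally show ?thesis using Ml by simp
  qed
  have "en K (N0*M) F = (\<Sum>i<N0. \<Sum>r<M. lm * Phi K (xg F (N0*M) (i*M+r) / lm))"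
    unfolding en_def lm_def by (rule sum_split_mult)
  moreover have "en K N0 F = (\<Sum>i<N0. l * Phi K (xg F N0 i / l))" by (simp add: en_def l_def)
  ultimately have "en K (N0*M) F - en K N0 F = (\<Sum>i<N0. (\<Sum>r<M. lm * Phi K (xg F (N0*M) (i*M+r) / lm)) - l * Phi K (xg F N0 i / l))"
    by (simp add: sum_subtractf)
  also have "\<dots> = (\<Sum>i<N0. \<Sum>r<M. lm * Dv K (xg F (N0*M) (i*M+r) / lm) (xg F N0 i / l))"
    using per by simp
  finally show ?thesis by (simp add: lm_def l_def)
qed

lemma fine_bound:
  assumes ac: "acp F \<eta> \<epsilon>" and pos: "\<eta> > 0" "K > 0" and K\<eta>: "(K/2) * \<eta> \<ge> 2*\<epsilon>"
    and N0: "N0 > 0" "2/N0 \<le> \<eta>/2" and M: "M > 0" and \<tau>: "\<tau> > 0"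
    and th: "en K (N0*M) F - en K N0 F \<le> \<theta>"
  shows "(\<Sum>i<N0. \<Sum>r<M. \<bar>xg F (N0*M) (i*M+r) - (xg F N0 i / (2/N0)) * (2/(N0*M))\<bar>)
     \<le> 2*\<epsilon> + \<tau> + \<theta>/(2*\<tau>) + 6*\<theta>/K"
proof -
  define l where "l = 2 / real N0"
  define lm where "lm = 2 / real (N0*M)"
  have l: "l > 0" using N0 by (simp add: l_def)
  have lam: "lm > 0" using N0 M by (simp add: lm_def)
  have Ml: "real M * lm = l" using M by (simp add: lm_def l_def)
  define s where "s i = xg F N0 i / l" for i
  define x where "x i r = xg F (N0*M) (i*M+r)" for i r
  define D where "D i r = Dv K (x i r / lm) (s i)" for i r
  have D0: "D i r \<ge> 0" for i r unfolding D_def by (rule Dv_nonneg[OF pos(2)])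
  define H where "H = {i. i < N0 \<and> \<bar>xg F N0 i\<bar> > (K/2) * (2/N0)}"
  have HN: "H \<subseteq> {..<N0}" by (auto simp: H_def)
  have cH: "real (card H) * (2/N0) < \<eta>"
    by (rule heavy_count[OF ac N0(1) N0(2) K\<eta> _ pos(1)]) (use pos in \<open>auto simp: H_def\<close>)
  have s1: "(\<Sum>i\<in>H. \<Sum>r<M. \<bar>x i r\<bar>) < \<epsilon>" unfolding x_def by (rule acp_fine[OF ac N0(1) M HN cH])
  have s2: "(\<Sum>i\<in>H. \<bar>xg F N0 i\<bar>) < \<epsilon>" by (rule acp_grid[OF ac N0(1) HN cH])
  have pw: "\<bar>x i r - s i * lm\<bar> \<le> (if i \<in> H then \<bar>x i r\<bar> + \<bar>s i\<bar> * lm else 0)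
        + lm * (\<tau>/2 + D i r / (2*\<tau>) + 6 * D i r / K)" if "i < N0" for i r
  proof -
    have nn: "0 \<le> lm * (\<tau>/2 + D i r / (2*\<tau>) + 6 * D i r / K)"
      using lam \<tau> D0[of i r] pos by simp
    show ?thesis
    proof (cases "i \<in> H")
      case True
      have "\<bar>x i r - s i * lm\<bar> \<le> \<bar>x i r\<bar> + \<bar>s i\<bar> * lm" using lam by (simp add: abs_triangle_ineq4[THEN order_trans] abs_mult)
      then show ?thesis using True nn by simp
    next
      case False
      then have "\<bar>s i\<bar> \<le> K/2" using that l by (auto simp: H_def s_def l_def abs_div abs_mult field_simps)
      from Dv_bound[OF pos(2) \<tau> this, of "x i r / lm"]
      have "\<bar>x i r / lm - s i\<bar> \<le> \<tau>/2 + D i r / (2*\<tau>) + 6 * D i r / K" by (simp add: D_def)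
      then have "lm * \<bar>x i r / lm - s i\<bar> \<le> lm * (\<tau>/2 + D i r / (2*\<tau>) + 6 * D i r / K)"
        using lam by (intro mult_left_mono) auto
      moreover have "lm * \<bar>x i r / lm - s i\<bar> = \<bar>x i r - s i * lm\<bar>"
      proof -
        have e: "x i r - s i * lm = lm * (x i r / lm - s i)" using lam by (simp add: field_simps)
        show ?thesis unfolding e using lam by (simp add: abs_mult)
      qed
      ultimately show ?thesis using False by simp
    qed
  qed
  define c where "c = 1/(2*\<tau>) + 6/K"
  have c0: "c > 0" using \<tau> pos unfolding c_def by (intro add_pos_pos) auto
  define P where "P i r = (if i \<in> H then \<bar>x i r\<bar> + \<bar>s i\<bar> * lm else 0)" for i r
  have pe: "lm * (\<tau>/2 + D i r / (2*\<tau>) + 6 * D i r / K) = lm * (\<tau>/2) + c * (lm * D i r)" for i r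
    using \<tau> pos by (simp add: c_def field_simps)
  have "(\<Sum>i<N0. \<Sum>r<M. \<bar>x i r - s i * lm\<bar>) \<le>
      (\<Sum>i<N0. \<Sum>r<M. P i r + (lm * (\<tau>/2) + c * (lm * D i r)))"
    by (intro sum_mono) (use pw pe in \<open>auto simp: P_def\<close>)
  also have "\<dots> = (\<Sum>i<N0. \<Sum>r<M. P i r) + (\<Sum>i<N0. \<Sum>r<M. lm * (\<tau>/2)) + c * (\<Sum>i<N0. \<Sum>r<M. lm * D i r)"
    by (simp only: sum.distrib sum_distrib_left)
  also have "(\<Sum>i<N0. \<Sum>r<M. P i r) = (\<Sum>i<N0. (if i \<in> H then (\<Sum>r<M. \<bar>x i r\<bar>) + \<bar>s i\<bar> * l else 0))"
  proof (rule sum.cong[OF refl])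
    fix i show "(\<Sum>r<M. P i r) = (if i \<in> H then (\<Sum>r<M. \<bar>x i r\<bar>) + \<bar>s i\<bar> * l else 0)"
      using Ml by (cases "i \<in> H") (auto simp: P_def sum.distrib algebra_simps)
  qed
  also have "\<dots> = (\<Sum>i\<in>H. (\<Sum>r<M. \<bar>x i r\<bar>) + \<bar>s i\<bar> * l)"
    by (rule sum_if_restrict[OF HN])
  also have "\<dots> = (\<Sum>i\<in>H. \<Sum>r<M. \<bar>x i r\<bar>) + (\<Sum>i\<in>H. \<bar>xg F N0 i\<bar>)"
    using l by (simp add: sum.distrib s_def abs_div)
  also have "(\<Sum>i<N0. \<Sum>r<M. lm * (\<tau>/2)) = \<tau>" using N0 M by (simp add: lm_def)
  finally have A: "(\<Sum>i<N0. \<Sum>r<M. \<bar>x i r - s i * lm\<bar>) \<le>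
     (\<Sum>i\<in>H. \<Sum>r<M. \<bar>x i r\<bar>) + (\<Sum>i\<in>H. \<bar>xg F N0 i\<bar>) + \<tau> + c * (\<Sum>i<N0. \<Sum>r<M. lm * D i r)" .
  have B: "(\<Sum>i<N0. \<Sum>r<M. lm * D i r) \<le> \<theta>"
    using th en_decomp[OF N0(1) M, of K F] by (simp add: D_def x_def s_def lm_def l_def)
  have C: "c * (\<Sum>i<N0. \<Sum>r<M. lm * D i r) \<le> c * \<theta>" using B c0 by (intro mult_left_mono) auto
  have E: "c * \<theta> = \<theta>/(2*\<tau>) + 6*\<theta>/K" by (simp add: c_def algebra_simps)
  have "(\<Sum>i<N0. \<Sum>r<M. \<bar>x i r - s i * lm\<bar>) \<le> 2*\<epsilon> + \<tau> + \<theta>/(2*\<tau>) + 6*\<theta>/K"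
    using A C E s1 s2 by linarith
  then show ?thesis by (simp add: x_def s_def lm_def l_def)
qed

definition clampc :: "real \<Rightarrow> real \<Rightarrow> real \<Rightarrow> real" where
  "clampc u v t = min (max t u) v"

definition Lf :: "nat \<Rightarrow> (nat \<Rightarrow> real) \<Rightarrow> real \<Rightarrow> real" where
  "Lf N0 s t = (\<Sum>i<N0. s i * (clampc (node N0 i) (node N0 (Suc i)) t - node N0 i))"

lemma clampc_ge: "v \<le> t \<Longrightarrow> u \<le> v \<Longrightarrow> clampc u v t = v" by (simp add: clampc_def)
lemma clampc_le: "t \<le> u \<Longrightarrow> u \<le> v \<Longrightarrow> clampc u v t = u" by (simp add: clampc_def)
lemma clampc_in: "u \<le> t \<Longrightarrow> t \<le> v \<Longrightarrow> clampc u v t = t" by (simp add: clampc_def)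

lemma clampc_lip: "\<bar>clampc u v t - clampc u v t'\<bar> \<le> \<bar>t - t'\<bar>"
  unfolding clampc_def by (auto simp: min_def max_def abs_if)

lemma Lf_lip: "\<bar>Lf N0 s t - Lf N0 s t'\<bar> \<le> (\<Sum>i<N0. \<bar>s i\<bar>) * \<bar>t - t'\<bar>"
proof -
  have "Lf N0 s t - Lf N0 s t' = (\<Sum>i<N0. s i * (clampc (node N0 i) (node N0 (Suc i)) t - clampc (node N0 i) (node N0 (Suc i)) t'))"
    unfolding Lf_def by (simp add: sum_subtractf[symmetric] algebra_simps)
  also have "\<bar>\<dots>\<bar> \<le> (\<Sum>i<N0. \<bar>s i * (clampc (node N0 i) (node N0 (Suc i)) t - clampc (node N0 i) (node N0 (Suc i)) t')\<bar>)"
    by (rule sum_abs)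
  also have "\<dots> \<le> (\<Sum>i<N0. \<bar>s i\<bar> * \<bar>t - t'\<bar>)"
    by (intro sum_mono) (simp add: abs_mult mult_left_mono clampc_lip)
  finally show ?thesis by (simp add: sum_distrib_right)
qed

lemma Lf_fine:
  assumes N0: "N0 > 0" and M: "M > 0" and j: "j < N0*M"
  shows "Lf N0 s (node (N0*M) (Suc j)) - Lf N0 s (node (N0*M) j) = s (j div M) * (2/(N0*M))"
proof -
  define i0 where "i0 = j div M"
  define r where "r = j mod M"
  define lm where "lm = 2 / real (N0*M)"
  have jr: "j = i0*M + r" by (simp add: i0_def r_def)
  have r: "r < M" using M by (simp add: r_def)
  have i0: "i0 < N0" using j M by (simp add: i0_def less_mult_imp_div_less)
  have t1: "node (N0*M) j = node N0 i0 + r * lm" using node_fine[OF N0 M] jr by (simp add: lm_def)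
  have t2: "node (N0*M) (Suc j) = node N0 i0 + (r+1) * lm" using node_fine[OF N0 M, of i0 "r+1"] jr by (simp add: lm_def)
  have lm: "lm > 0" using N0 M by (simp add: lm_def)
  have up: "node N0 i0 + (r+1) * lm \<le> node N0 (Suc i0)"
  proof -
    have "node N0 (Suc i0) = node N0 i0 + M * lm" using node_Suc[OF N0, of i0] M by (simp add: lm_def)
    moreover have "real (r+1) \<le> real M" using r by simp
    ultimately show ?thesis using lm by (simp add: mult_right_mono)
  qed
  have d: "clampc (node N0 i) (node N0 (Suc i)) (node (N0*M) (Suc j)) - clampc (node N0 i) (node N0 (Suc i)) (node (N0*M) j)
        = (if i = i0 then lm else 0)" for i
  proof -
    consider "i < i0" | "i = i0" | "i > i0" by linarith
    then show ?thesis
    proof cases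
      case 1
      then have "node N0 (Suc i) \<le> node N0 i0" by (intro node_mono[OF N0]) simp
      moreover have "node N0 i \<le> node N0 (Suc i)" by (intro node_mono[OF N0]) simp
      moreover have "node N0 i0 \<le> node (N0*M) j" "node N0 i0 \<le> node (N0*M) (Suc j)" using t1 t2 lm by auto
      ultimately show ?thesis using 1 by (simp add: clampc_ge)
    next
      case 2
      have a1: "node N0 i0 \<le> node (N0*M) j" "node (N0*M) j \<le> node N0 (Suc i0)" using t1 t2 lm up by (auto simp: algebra_simps)
      have a2: "node N0 i0 \<le> node (N0*M) (Suc j)" "node (N0*M) (Suc j) \<le> node N0 (Suc i0)" using t1 t2 lm up by auto
      have "clampc (node N0 i) (node N0 (Suc i)) (node (N0*M) (Suc j)) = node (N0*M) (Suc j)"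
        using 2 a2 by (simp add: clampc_in)
      moreover have "clampc (node N0 i) (node N0 (Suc i)) (node (N0*M) j) = node (N0*M) j"
        using 2 a1 by (simp add: clampc_in)
      ultimately show ?thesis using 2 t1 t2 by (simp add: algebra_simps)
    next
      case 3
      then have "node N0 (Suc i0) \<le> node N0 i" by (intro node_mono[OF N0]) simp
      moreover have "node N0 i \<le> node N0 (Suc i)" by (intro node_mono[OF N0]) simp
      moreover have "node (N0*M) j \<le> node N0 (Suc i0)" "node (N0*M) (Suc j) \<le> node N0 (Suc i0)" using t1 t2 lm up by (auto simp: algebra_simps)
      ultimately show ?thesis using 3 by (simp add: clampc_le)
    qed
  qed
  have "Lf N0 s (node (N0*M) (Suc j)) - Lf N0 s (node (N0*M) j) =
     (\<Sum>i<N0. s i * (clampc (node N0 i) (node N0 (Suc i)) (node (N0*M) (Suc j)) - clampc (node N0 i) (node N0 (Suc i)) (node (N0*M) j)))"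
    unfolding Lf_def by (simp add: sum_subtractf[symmetric] algebra_simps)
  also have "\<dots> = (\<Sum>i<N0. (if i = i0 then s i0 * lm else 0))" by (intro sum.cong) (auto simp: d)
  also have "\<dots> = s i0 * lm" using i0 by simp
  finally show ?thesis by (simp add: i0_def lm_def)
qed

lemma alt_pairs: "(\<Sum>k<2*P. (-1::real)^k * z k) = (\<Sum>p<P. z (2*p) - z (2*p+1))"
  by (induction P) (auto simp: algebra_simps)

lemma clamp_sd:
  assumes uv: "u \<le> v" and d: "\<delta> \<ge> 0"
  shows "\<bar>clampc u v \<alpha> - 2 * clampc u v (\<alpha>+\<delta>) + clampc u v (\<alpha>+2*\<delta>)\<bar>
     \<le> (if \<alpha> < u \<and> u < \<alpha>+2*\<delta> then 2*\<delta> else 0) + (if \<alpha> < v \<and> v < \<alpha>+2*\<delta> then 2*\<delta> else 0)"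
proof -
  have gen: "\<bar>clampc u v \<alpha> - 2 * clampc u v (\<alpha>+\<delta>) + clampc u v (\<alpha>+2*\<delta>)\<bar> \<le> 2*\<delta>"
  proof -
    have "\<bar>clampc u v \<alpha> - clampc u v (\<alpha>+\<delta>)\<bar> \<le> \<delta>" using clampc_lip[of u v \<alpha> "\<alpha>+\<delta>"] d by simp
    moreover have "\<bar>clampc u v (\<alpha>+2*\<delta>) - clampc u v (\<alpha>+\<delta>)\<bar> \<le> \<delta>" using clampc_lip[of u v "\<alpha>+2*\<delta>" "\<alpha>+\<delta>"] d by simp
    ultimately show ?thesis by linarith
  qed
  show ?thesis
  proof (cases "(\<alpha> < u \<and> u < \<alpha>+2*\<delta>) \<or> (\<alpha> < v \<and> v < \<alpha>+2*\<delta>)")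
    case True
    then show ?thesis using gen d by auto
  next
    case False
    then consider "\<alpha> + 2*\<delta> \<le> u" | "v \<le> \<alpha>" | "u \<le> \<alpha> \<and> \<alpha> + 2*\<delta> \<le> v" using uv d by linarith
    then have "clampc u v \<alpha> - 2 * clampc u v (\<alpha>+\<delta>) + clampc u v (\<alpha>+2*\<delta>) = 0"
      by cases (use d uv in \<open>auto simp: clampc_def min_def max_def\<close>)
    then show ?thesis by simp
  qed
qed

lemma card_bad:
  assumes d: "\<delta> > 0"
  shows "card {p. p < P \<and> a + 2*real p*\<delta> < w \<and> w < a + 2*real p*\<delta> + 2*\<delta>} \<le> 1"
proof -
  let ?B = "{p. p < P \<and> a + 2*real p*\<delta> < w \<and> w < a + 2*real p*\<delta> + 2*\<delta>}"
  have "\<forall>p\<in>?B. \<forall>q\<in>?B. p = q"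
  proof (intro ballI, rule ccontr)
    fix p q assume p: "p \<in> ?B" and q: "q \<in> ?B" and ne: "p \<noteq> q"
    have key: "False" if "p' \<in> ?B" "q' \<in> ?B" "p' < q'" for p' q'
    proof -
      have "real p' + 1 \<le> real q'" using that(3) by simp
      then have "2*real p'*\<delta> + 2*\<delta> \<le> 2*real q'*\<delta>" using d
        by (metis distrib_right mult.commute mult_1 mult_le_cancel_left_pos mult_pos_pos zero_less_numeral less_eq_real_def)
      then show False using that(1,2) by auto
    qed
    show False using ne key p q by (meson nat_neq_iff)
  qed
  moreover have "finite ?B" by (rule finite_subset[of _ "{..<P}"]) auto
  ultimately have "card ?B \<le> Suc 0" using card_le_Suc0_iff_eq[of ?B] by blast
  then show ?thesis by simp
qed

lemma sum_bad:
  assumes d: "\<delta> > 0"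
  shows "(\<Sum>p<P. (if a + 2*real p*\<delta> < w \<and> w < a + 2*real p*\<delta> + 2*\<delta> then 2*\<delta> else 0)) \<le> 2*\<delta>"
proof -
  let ?B = "{p. p < P \<and> a + 2*real p*\<delta> < w \<and> w < a + 2*real p*\<delta> + 2*\<delta>}"
  have "(\<Sum>p<P. (if a + 2*real p*\<delta> < w \<and> w < a + 2*real p*\<delta> + 2*\<delta> then 2*\<delta> else 0)) = (\<Sum>p\<in>?B. 2*\<delta>)"
    by (subst sum_if_restrict[symmetric, where N=P]) (auto intro!: sum.cong)
  also have "\<dots> = real (card ?B) * (2*\<delta>)" by simp
  also have "\<dots> \<le> 1 * (2*\<delta>)" using card_bad[OF d, of P a w] d by (intro mult_right_mono) auto
  finally show ?thesis by simp
qed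

lemma alt_L:
  assumes N0: "N0 > 0" and d: "\<delta> \<ge> 0"
  shows "\<bar>\<Sum>k<m. (-1::real)^k * (Lf N0 s (a + real (Suc k)*\<delta>) - Lf N0 s (a + real k*\<delta>))\<bar>
     \<le> 5 * (\<Sum>i<N0. \<bar>s i\<bar>) * \<delta>"
proof (cases "\<delta> = 0")
  case True then show ?thesis by simp
next
  case False
  then have d: "\<delta> > 0" using d by simp
  define C1 where "C1 = (\<Sum>i<N0. \<bar>s i\<bar>)"
  have C1: "C1 \<ge> 0" by (simp add: C1_def sum_nonneg)
  define z where "z k = Lf N0 s (a + real (Suc k)*\<delta>) - Lf N0 s (a + real k*\<delta>)" for k
  define P where "P = m div 2"
  define u where "u i = node N0 i" for i
  define c where "c i t = clampc (u i) (u (Suc i)) t" for i t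
  have uv: "u i \<le> u (Suc i)" for i unfolding u_def by (rule node_mono[OF N0]) simp
  have zp: "z (2*p) - z (2*p+1) = - (\<Sum>i<N0. s i * (c i (a + 2*real p*\<delta>) - 2 * c i (a + 2*real p*\<delta> + \<delta>) + c i (a + 2*real p*\<delta> + 2*\<delta>)))" for p
  proof -
    have e1: "a + real (Suc (2*p))*\<delta> = a + 2*real p*\<delta> + \<delta>" by (simp add: algebra_simps)
    have e2: "a + real (2*p)*\<delta> = a + 2*real p*\<delta>" by simp
    have e3: "a + real (Suc (2*p+1))*\<delta> = a + 2*real p*\<delta> + 2*\<delta>" by (simp add: algebra_simps)
    have e4: "a + real (2*p+1)*\<delta> = a + 2*real p*\<delta> + \<delta>" by (simp add: algebra_simps)
    show ?thesis unfolding z_def e1 e2 e3 e4 Lf_def c_def u_def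
      by (simp add: sum_subtractf[symmetric] sum.distrib[symmetric] sum_negf[symmetric] algebra_simps)
  qed
  have pairs: "\<bar>\<Sum>p<P. z (2*p) - z (2*p+1)\<bar> \<le> 4 * C1 * \<delta>"
  proof -
    let ?sd = "\<lambda>i p. c i (a + 2*real p*\<delta>) - 2 * c i (a + 2*real p*\<delta> + \<delta>) + c i (a + 2*real p*\<delta> + 2*\<delta>)"
    have "\<bar>\<Sum>p<P. z (2*p) - z (2*p+1)\<bar> = \<bar>\<Sum>i<N0. s i * (\<Sum>p<P. ?sd i p)\<bar>"
      unfolding zp by (simp add: sum_negf sum_distrib_left sum.swap[of _ "{..<P}"])
    also have "\<dots> \<le> (\<Sum>i<N0. \<bar>s i\<bar> * \<bar>\<Sum>p<P. ?sd i p\<bar>)" by (rule order_trans[OF sum_abs]) (simp add: abs_mult)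
    also have "\<dots> \<le> (\<Sum>i<N0. \<bar>s i\<bar> * (4*\<delta>))"
    proof (intro sum_mono mult_left_mono)
      fix i
      have "\<bar>\<Sum>p<P. ?sd i p\<bar> \<le> (\<Sum>p<P. \<bar>?sd i p\<bar>)" by (rule sum_abs)
      also have "\<dots> \<le> (\<Sum>p<P. (if a + 2*real p*\<delta> < u i \<and> u i < a + 2*real p*\<delta> + 2*\<delta> then 2*\<delta> else 0)
                        + (if a + 2*real p*\<delta> < u (Suc i) \<and> u (Suc i) < a + 2*real p*\<delta> + 2*\<delta> then 2*\<delta> else 0))"
        by (intro sum_mono) (unfold c_def, rule clamp_sd[OF uv[of i] less_imp_le[OF d]])
      also have "\<dots> \<le> 2*\<delta> + 2*\<delta>" unfolding sum.distrib by (intro add_mono sum_bad[OF d])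
      finally show "\<bar>\<Sum>p<P. ?sd i p\<bar> \<le> 4*\<delta>" by simp
    qed simp
    also have "\<dots> = 4 * C1 * \<delta>" unfolding C1_def sum_distrib_right[symmetric] by (simp add: algebra_simps)
    finally show ?thesis .
  qed
  have zb: "\<bar>z k\<bar> \<le> C1 * \<delta>" for k
    using Lf_lip[of N0 s "a + real (Suc k)*\<delta>" "a + real k*\<delta>"] d by (simp add: z_def C1_def algebra_simps)
  have "(\<Sum>k<m. (-1::real)^k * z k) = (\<Sum>p<P. z (2*p) - z (2*p+1)) + (if odd m then z (m-1) else 0)"
  proof (cases "even m")
    case True
    then have "m = 2*P" by (simp add: P_def)
    then show ?thesis using True alt_pairs by simp
  next
    case False
    then have m: "m = Suc (2*P)" by (simp add: P_def)
    show ?thesis unfolding m by (simp add: alt_pairs)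
  qed
  moreover have "\<bar>(if odd m then z (m-1) else 0)\<bar> \<le> C1 * \<delta>" using zb C1 d by auto
  ultimately have "\<bar>\<Sum>k<m. (-1::real)^k * z k\<bar> \<le> 4 * C1 * \<delta> + C1 * \<delta>" using pairs by linarith
  then show ?thesis by (simp add: z_def C1_def algebra_simps)
qed

lemma node_eq: "node N j = real j * (2/N) - 1" by (simp add: node_def)

lemma round_bound:
  fixes R :: "real \<Rightarrow> real"
  assumes N: "N > 0" and lam: "2/N < \<delta>" and a: "-1 \<le> a" "a + real m * \<delta> \<le> 1"
    and om: "\<And>t t'. -1 \<le> t \<Longrightarrow> t \<le> 1 \<Longrightarrow> -1 \<le> t' \<Longrightarrow> t' \<le> 1 \<Longrightarrow> \<bar>t - t'\<bar> \<le> 2/N \<Longrightarrow> \<bar>R t - R t'\<bar> \<le> \<omega>"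
  shows "(\<Sum>k<m. \<bar>R (a + real (Suc k) * \<delta>) - R (a + real k * \<delta>)\<bar>)
     \<le> (\<Sum>j<N. \<bar>R (node N (Suc j)) - R (node N j)\<bar>) + 2 * real m * \<omega>"
proof -
  define lm where "lm = 2 / real N"
  have lm: "lm > 0" using N by (simp add: lm_def)
  have d: "\<delta> > 0" using lam lm unfolding lm_def by linarith
  define \<alpha> where "\<alpha> k = a + real k * \<delta>" for k
  define p where "p k = nat \<lceil>(\<alpha> k + 1)/lm\<rceil>" for k
  define q where "q k = nat \<lfloor>(\<alpha> (Suc k) + 1)/lm\<rfloor>" for k
  define r where "r j = R (node N (Suc j)) - R (node N j)" for j
  have g: "node N j = real j * lm - 1" for j by (simp add: node_eq lm_def)
  have \<alpha>lo: "\<alpha> k \<ge> -1" for k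
  proof -
    have "real k * \<delta> \<ge> 0" using d by simp
    then show ?thesis using a(1) unfolding \<alpha>_def by linarith
  qed
  have \<alpha>hi: "\<alpha> k \<le> 1" if "k \<le> m" for k
  proof -
    have "real k * \<delta> \<le> real m * \<delta>" using that d by (intro mult_right_mono) auto
    then show ?thesis using a by (simp add: \<alpha>_def)
  qed
  have \<omega>0: "\<omega> \<ge> 0" using om[of a a] a \<alpha>hi[of 0] by (simp add: \<alpha>_def)
  have rp: "real (p k) = real_of_int \<lceil>(\<alpha> k + 1)/lm\<rceil>" for k
  proof -
    have "(\<alpha> k + 1)/lm \<ge> 0" using \<alpha>lo[of k] lm by simp
    then show ?thesis by (simp add: p_def)
  qed
  have rq: "real (q k) = real_of_int \<lfloor>(\<alpha> (Suc k) + 1)/lm\<rfloor>" for k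
  proof -
    have "(\<alpha> (Suc k) + 1)/lm \<ge> 0" using \<alpha>lo[of "Suc k"] lm by simp
    then show ?thesis by (simp add: q_def)
  qed
  have gp1: "\<alpha> k \<le> node N (p k)" for k
  proof -
    have "(\<alpha> k + 1)/lm \<le> real (p k)" using rp[of k] ceiling_correct[of "(\<alpha> k + 1)/lm"] by linarith
    then have "\<alpha> k + 1 \<le> real (p k) * lm" using lm by (simp add: field_simps)
    then show ?thesis by (simp add: g)
  qed
  have gp2: "node N (p k) - \<alpha> k < lm" for k
  proof -
    have "real (p k) < (\<alpha> k + 1)/lm + 1" using rp[of k] ceiling_correct[of "(\<alpha> k + 1)/lm"] by linarith
    then have "real (p k) * lm < \<alpha> k + 1 + lm" using lm by (simp add: field_simps)
    then show ?thesis by (simp add: g)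
  qed
  have gq1: "node N (q k) \<le> \<alpha> (Suc k)" for k
  proof -
    have "real (q k) \<le> (\<alpha> (Suc k) + 1)/lm" using rq[of k] by simp
    then have "real (q k) * lm \<le> \<alpha> (Suc k) + 1" using lm by (simp add: field_simps)
    then show ?thesis by (simp add: g)
  qed
  have gq2: "\<alpha> (Suc k) - node N (q k) < lm" for k
  proof -
    have "(\<alpha> (Suc k) + 1)/lm < real (q k) + 1" using rq[of k] floor_correct[of "(\<alpha> (Suc k) + 1)/lm"] by linarith
    then have "\<alpha> (Suc k) + 1 < real (q k) * lm + lm" using lm by (simp add: field_simps)
    then show ?thesis by (simp add: g)
  qed
  have pq: "p k \<le> q k" for k
  proof -
    have e: "(\<alpha> (Suc k) + 1)/lm = (\<alpha> k + 1)/lm + \<delta>/lm" by (simp add: \<alpha>_def add_divide_distrib[symmetric] algebra_simps)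
    have "\<delta>/lm > 1" using lam lm by (simp add: lm_def) (simp add: field_simps)
    then have "real_of_int \<lceil>(\<alpha> k + 1)/lm\<rceil> \<le> (\<alpha> (Suc k) + 1)/lm"
      using e ceiling_correct[of "(\<alpha> k + 1)/lm"] by linarith
    then have "\<lceil>(\<alpha> k + 1)/lm\<rceil> \<le> \<lfloor>(\<alpha> (Suc k) + 1)/lm\<rfloor>" by (simp add: le_floor_iff)
    then have "real (p k) \<le> real (q k)" using rp rq by simp
    then show ?thesis by simp
  qed
  have qN: "q k \<le> N" if "k < m" for k
  proof -
    have "real (q k) \<le> (\<alpha> (Suc k) + 1)/lm" using rq[of k] by simp
    also have "\<dots> \<le> 2 / lm" using \<alpha>hi[of "Suc k"] that lm by (simp add: divide_right_mono)
    also have "2 / lm = real N" using N by (simp add: lm_def)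
    finally show ?thesis by simp
  qed
  have disj: "q k \<le> p k'" if "k < k'" for k k'
  proof -
    have "\<alpha> (Suc k) \<le> \<alpha> k'" using that d by (simp add: \<alpha>_def mult_right_mono)
    then have "(\<alpha> (Suc k) + 1)/lm \<le> (\<alpha> k' + 1)/lm" using lm by (simp add: divide_right_mono)
    then have "real (q k) \<le> real (p k')" using rq[of k] rp[of k'] ceiling_correct[of "(\<alpha> k' + 1)/lm"]
      floor_correct[of "(\<alpha> (Suc k) + 1)/lm"] by linarith
    then show ?thesis by simp
  qed
  have gr: "-1 \<le> node N j \<and> node N j \<le> 1" if "j \<le> N" for j using node_range[OF N that] .
  have cell: "\<bar>R (\<alpha> (Suc k)) - R (\<alpha> k)\<bar> \<le> 2*\<omega> + (\<Sum>j\<in>{p k..<q k}. \<bar>r j\<bar>)" if k: "k < m" for k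
  proof -
    have pN: "p k \<le> N" using pq[of k] qN[OF k] by simp
    have b1: "\<bar>R (\<alpha> (Suc k)) - R (node N (q k))\<bar> \<le> \<omega>"
      using om[of "\<alpha> (Suc k)" "node N (q k)"] \<alpha>lo \<alpha>hi[of "Suc k"] k gr[OF qN[OF k]] gq1[of k] gq2[of k] lm
      by (simp add: lm_def)
    have b2: "\<bar>R (node N (p k)) - R (\<alpha> k)\<bar> \<le> \<omega>"
      using om[of "node N (p k)" "\<alpha> k"] \<alpha>lo \<alpha>hi[of k] k gr[OF pN] gp1[of k] gp2[of k] lm
      by (simp add: lm_def)
    have t: "(\<Sum>j\<in>{p k..<q k}. r j) = R (node N (q k)) - R (node N (p k))"
      unfolding r_def by (rule sum_Suc_diff'[OF pq])
    have "R (\<alpha> (Suc k)) - R (\<alpha> k) = (R (\<alpha> (Suc k)) - R (node N (q k))) + (\<Sum>j\<in>{p k..<q k}. r j) + (R (node N (p k)) - R (\<alpha> k))"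
      using t by simp
    moreover have "\<bar>\<Sum>j\<in>{p k..<q k}. r j\<bar> \<le> (\<Sum>j\<in>{p k..<q k}. \<bar>r j\<bar>)" by (rule sum_abs)
    ultimately show ?thesis using b1 b2 by linarith
  qed
  have "(\<Sum>k<m. \<bar>R (\<alpha> (Suc k)) - R (\<alpha> k)\<bar>) \<le> (\<Sum>k<m. 2*\<omega> + (\<Sum>j\<in>{p k..<q k}. \<bar>r j\<bar>))"
    by (intro sum_mono) (use cell in auto)
  also have "\<dots> = 2 * real m * \<omega> + (\<Sum>k<m. \<Sum>j\<in>{p k..<q k}. \<bar>r j\<bar>)" by (simp add: sum.distrib)
  also have "(\<Sum>k<m. \<Sum>j\<in>{p k..<q k}. \<bar>r j\<bar>) = (\<Sum>j\<in>(\<Union>k\<in>{..<m}. {p k..<q k}). \<bar>r j\<bar>)"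
  proof (rule sum.UNION_disjoint[symmetric])
    show "finite {..<m}" by simp
    show "\<forall>k\<in>{..<m}. finite {p k..<q k}" by simp
    show "\<forall>k\<in>{..<m}. \<forall>k'\<in>{..<m}. k \<noteq> k' \<longrightarrow> {p k..<q k} \<inter> {p k'..<q k'} = {}"
    proof (intro ballI impI)
      fix k k' :: nat assume "k \<noteq> k'"
      then consider "k < k'" | "k' < k" by linarith
      then show "{p k..<q k} \<inter> {p k'..<q k'} = {}"
        by cases (use disj in \<open>fastforce+\<close>)
    qed
  qed
  also have "\<dots> \<le> (\<Sum>j<N. \<bar>r j\<bar>)"
  proof (rule sum_mono2)
    show "finite {..<N}" by simp
    show "(\<Union>k\<in>{..<m}. {p k..<q k}) \<subseteq> {..<N}" using qN by fastforce
  qed auto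
  finally show ?thesis by (simp add: \<alpha>_def r_def)
qed

lemma acp_unif:
  assumes "acp F \<eta> \<epsilon>" "-1 \<le> t" "t \<le> 1" "-1 \<le> t'" "t' \<le> 1" "\<bar>t - t'\<bar> < \<eta>"
  shows "\<bar>F t - F t'\<bar> < \<epsilon>"
proof -
  have "(\<Sum>i\<in>{0::nat}. \<bar>F (max t t') - F (min t t')\<bar>) < \<epsilon>"
    by (rule acp_family[OF assms(1)]) (use assms in auto)
  then show ?thesis by (cases "t \<le> t'") (auto simp: max_def min_def abs_minus_commute)
qed

lemma altsum_small:
  assumes AC: "abs_cont_on {-1..1} F" and e: "e > 0"
  shows "\<exists>\<delta>0>0. \<forall>a \<delta> m. 0 \<le> \<delta> \<longrightarrow> \<delta> \<le> \<delta>0 \<longrightarrow> -1 \<le> a \<longrightarrow> a + real m * \<delta> \<le> 1 \<longrightarrow>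
     \<bar>\<Sum>k<m. (-1::real)^k * (F (a + real (Suc k) * \<delta>) - F (a + real k * \<delta>))\<bar> \<le> e"
proof -
  define \<epsilon> where "\<epsilon> = min (e/7) (1/6)"
  have \<epsilon>: "\<epsilon> > 0" "\<epsilon> \<le> e/7" "\<epsilon> \<le> 1/6" using e by (auto simp: \<epsilon>_def)
  obtain \<eta> where \<eta>: "\<eta> > 0" "acp F \<eta> \<epsilon>" using ac_acp[OF AC \<epsilon>(1)] by blast
  define K where "K = 4*\<epsilon>/\<eta> + 1"
  have "4*\<epsilon>/\<eta> \<ge> 0" using \<epsilon> \<eta> by simp
  then have K: "K \<ge> 1" "K > 0" by (auto simp: K_def)
  have K1: "K * \<eta> \<ge> 2*\<epsilon>" "(K/2) * \<eta> \<ge> 2*\<epsilon>" using \<epsilon> \<eta> by (auto simp: K_def field_simps)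
  define N1 where "N1 = nat \<lceil>4/\<eta>\<rceil> + 1"
  have N1: "N > 0 \<and> 2/real N \<le> \<eta>/2" if "N \<ge> N1" for N
  proof -
    have "4/\<eta> \<le> real (nat \<lceil>4/\<eta>\<rceil>)" by (rule real_nat_ceiling_ge)
    also have "\<dots> \<le> real N"
    proof -
      have h: "nat \<lceil>4/\<eta>\<rceil> \<le> N" using that unfolding N1_def by linarith
      show ?thesis using h by (simp only: of_nat_le_iff)
    qed
    finally have "real N \<ge> 4/\<eta>" .
    moreover have "4/\<eta> > 0" using \<eta> by simp
    ultimately have Np: "real N > 0" by linarith
    then have "N > 0" by simp
    moreover have "4 \<le> \<eta> * real N" using \<open>real N \<ge> 4/\<eta>\<close> \<eta> by (simp add: field_simps)
    then have "2/real N \<le> \<eta>/2" using Np by (simp add: field_simps)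
    ultimately show ?thesis by simp
  qed
  define B where "B = 2*K\<^sup>2 + 2*K*\<epsilon>"
  have enB: "en K N F \<le> B" if "N \<ge> N1" for N
    using en_bound[OF \<eta>(2) \<eta>(1) K(2) K1(1)] N1[OF that] by (simp add: B_def)
  define E where "E = (\<lambda>N. en K N F) ` {N1..}"
  have Ene: "E \<noteq> {}" by (simp add: E_def)
  have Ebdd: "bdd_above E" unfolding E_def bdd_above_def using enB by auto
  define \<theta> where "\<theta> = \<epsilon>\<^sup>2"
  have \<theta>: "\<theta> > 0" using \<epsilon> by (simp add: \<theta>_def)
  have "Sup E - \<theta> < Sup E" using \<theta> by simp
  then have "\<exists>x\<in>E. Sup E - \<theta> < x" by (rule less_cSupD[OF Ene])
  then obtain x where "x \<in> E" "Sup E - \<theta> < x" by blast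
  then obtain N0 where N0: "N0 \<ge> N1" "en K N0 F > Sup E - \<theta>"
    unfolding E_def by auto
  have N0p: "N0 > 0" "2/real N0 \<le> \<eta>/2" using N1[OF N0(1)] by auto
  have enM: "en K (N0*M) F - en K N0 F \<le> \<theta>" if "M > 0" for M
  proof -
    have "N0*1 \<le> N0*M" using that by (intro mult_le_mono2) simp
    then have "N0*M \<ge> N1" using N0(1) by (metis mult_1_right le_trans)
    then have "en K (N0*M) F \<le> Sup E" using Ebdd by (intro cSup_upper) (auto simp: E_def)
    then show ?thesis using N0(2) by linarith
  qed
  define s where "s i = xg F N0 i / (2/real N0)" for i
  define C1 where "C1 = (\<Sum>i<N0. \<bar>s i\<bar>)"
  have C1: "C1 \<ge> 0" by (simp add: C1_def sum_nonneg)
  define \<delta>0 where "\<delta>0 = \<epsilon> / (5*C1 + 1)"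
  have \<delta>0: "\<delta>0 > 0" using \<epsilon> C1 by (simp add: \<delta>0_def)
  have \<delta>0b: "5 * C1 * \<delta>0 \<le> \<epsilon>"
  proof -
    have "5 * C1 * \<delta>0 \<le> (5*C1 + 1) * \<delta>0" using \<delta>0 by (simp add: mult_right_mono)
    also have "\<dots> = \<epsilon>" using C1 by (simp add: \<delta>0_def)
    finally show ?thesis .
  qed
  show ?thesis
  proof (intro exI[of _ \<delta>0] conjI \<delta>0 allI impI)
    fix a \<delta> :: real and m :: nat
    assume d0: "0 \<le> \<delta>" and d1: "\<delta> \<le> \<delta>0" and a1: "-1 \<le> a" and a2: "a + real m * \<delta> \<le> 1"
    show "\<bar>\<Sum>k<m. (-1::real)^k * (F (a + real (Suc k) * \<delta>) - F (a + real k * \<delta>))\<bar> \<le> e"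
    proof (cases "\<delta> = 0")
      case True then show ?thesis using e by simp
    next
      case False
      then have d: "\<delta> > 0" using d0 by simp
      define L where "L = Lf N0 s"
      define R where "R t = F t - L t" for t
      define \<omega> where "\<omega> = \<epsilon> / (2*real m + 1)"
      have \<omega>: "\<omega> > 0" using \<epsilon> by (simp add: \<omega>_def add_pos_nonneg)
      have m\<omega>: "2 * real m * \<omega> \<le> \<epsilon>"
      proof -
        have "2 * real m * \<omega> \<le> (2 * real m + 1) * \<omega>" using \<omega> by simp
        also have "\<dots> = \<epsilon>" by (simp add: \<omega>_def add_pos_nonneg)
        finally show ?thesis .
      qed
      obtain \<eta>u where \<eta>u: "\<eta>u > 0" "acp F \<eta>u (\<omega>/2)" using ac_acp[OF AC, of "\<omega>/2"] \<omega> by auto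
      define \<rho> where "\<rho> = min \<delta> (min \<eta>u (\<omega> / (2*(C1+1))))"
      have \<rho>: "\<rho> > 0" using d \<eta>u \<omega> C1 by (simp add: \<rho>_def)
      define M where "M = nat \<lceil>2/\<rho>\<rceil> + 1"
      have M: "M > 0" by (simp add: M_def)
      define N where "N = N0 * M"
      have N: "N > 0" using M N0p by (simp add: N_def)
      have lamr: "2 / real N < \<rho>"
      proof -
        have "2/\<rho> \<le> real (nat \<lceil>2/\<rho>\<rceil>)" by (rule real_nat_ceiling_ge)
        then have "real M > 2/\<rho>" unfolding M_def of_nat_add of_nat_1 by linarith
        moreover have "real N \<ge> real M"
        proof -
          have "1 * M \<le> N0 * M" using N0p by (intro mult_le_mono1) simp
          then show ?thesis by (simp add: N_def del: of_nat_mult)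
        qed
        ultimately have "real N > 2/\<rho>" by linarith
        then show ?thesis using \<rho> N by (simp add: field_simps)
      qed
      have lamd: "2 / real N < \<delta>" "2 / real N < \<eta>u" "2 / real N \<le> \<omega> / (2*(C1+1))"
        using lamr by (auto simp: \<rho>_def)
      have Rom: "\<bar>R t - R t'\<bar> \<le> \<omega>" if "-1 \<le> t" "t \<le> 1" "-1 \<le> t'" "t' \<le> 1" "\<bar>t - t'\<bar> \<le> 2/N" for t t'
      proof -
        have f: "\<bar>F t - F t'\<bar> < \<omega>/2" using acp_unif[OF \<eta>u(2) that(1-4)] that(5) lamd(2) by linarith
        have "\<bar>L t - L t'\<bar> \<le> C1 * \<bar>t - t'\<bar>" using Lf_lip[of N0 s t t'] by (simp add: L_def C1_def)
        also have "\<dots> \<le> C1 * (\<omega> / (2*(C1+1)))" using that(5) lamd(3) C1 by (intro mult_left_mono) auto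
        also have "\<dots> \<le> \<omega>/2"
        proof -
          have "C1 * (\<omega> / (2*(C1+1))) = (C1/(C1+1)) * (\<omega>/2)" by (simp add: field_simps)
          also have "\<dots> \<le> 1 * (\<omega>/2)" using C1 \<omega> by (intro mult_right_mono) auto
          finally show ?thesis by simp
        qed
        finally have l: "\<bar>L t - L t'\<bar> \<le> \<omega>/2" .
        have "\<bar>R t - R t'\<bar> \<le> \<bar>F t - F t'\<bar> + \<bar>L t - L t'\<bar>" unfolding R_def by linarith
        then show ?thesis using f l by linarith
      qed
      have split: "(\<Sum>k<m. (-1::real)^k * (F (a + real (Suc k) * \<delta>) - F (a + real k * \<delta>)))
          = (\<Sum>k<m. (-1::real)^k * (R (a + real (Suc k) * \<delta>) - R (a + real k * \<delta>)))
          + (\<Sum>k<m. (-1::real)^k * (L (a + real (Suc k) * \<delta>) - L (a + real k * \<delta>)))"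
        by (simp add: R_def sum.distrib[symmetric] algebra_simps)
      have bL: "\<bar>\<Sum>k<m. (-1::real)^k * (L (a + real (Suc k) * \<delta>) - L (a + real k * \<delta>))\<bar> \<le> \<epsilon>"
      proof -
        have "\<bar>\<Sum>k<m. (-1::real)^k * (L (a + real (Suc k) * \<delta>) - L (a + real k * \<delta>))\<bar> \<le> 5 * C1 * \<delta>"
          using alt_L[OF N0p(1) d0, where m=m and s=s and a=a] by (simp add: L_def C1_def)
        also have "\<dots> \<le> 5 * C1 * \<delta>0" using d1 C1 by (intro mult_left_mono) auto
        finally show ?thesis using \<delta>0b by linarith
      qed
      have bR1: "\<bar>\<Sum>k<m. (-1::real)^k * (R (a + real (Suc k) * \<delta>) - R (a + real k * \<delta>))\<bar>
          \<le> (\<Sum>k<m. \<bar>R (a + real (Suc k) * \<delta>) - R (a + real k * \<delta>)\<bar>)"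
        by (rule order_trans[OF sum_abs]) (simp add: abs_mult)
      have bR2: "(\<Sum>k<m. \<bar>R (a + real (Suc k) * \<delta>) - R (a + real k * \<delta>)\<bar>)
          \<le> (\<Sum>j<N. \<bar>R (node N (Suc j)) - R (node N j)\<bar>) + 2 * real m * \<omega>"
        by (rule round_bound[OF N lamd(1) a1 a2 Rom])
      have rj: "R (node N (Suc j)) - R (node N j) = xg F N j - s (j div M) * (2/(N0*M))" if "j < N" for j
        using Lf_fine[OF N0p(1) M, of j s] that by (simp add: R_def L_def xg_def N_def algebra_simps)
      have "(\<Sum>j<N. \<bar>R (node N (Suc j)) - R (node N j)\<bar>) = (\<Sum>j<N0*M. \<bar>xg F (N0*M) j - s (j div M) * (2/(N0*M))\<bar>)"
        using rj by (simp add: N_def)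
      also have "\<dots> = (\<Sum>i<N0. \<Sum>r<M. \<bar>xg F (N0*M) (i*M+r) - s ((i*M+r) div M) * (2/(N0*M))\<bar>)"
        by (rule sum_split_mult)
      also have "\<dots> = (\<Sum>i<N0. \<Sum>r<M. \<bar>xg F (N0*M) (i*M+r) - (xg F N0 i / (2/N0)) * (2/(N0*M))\<bar>)"
        using M by (intro sum.cong refl) (simp add: s_def)
      also have "\<dots> \<le> 2*\<epsilon> + \<epsilon> + \<theta>/(2*\<epsilon>) + 6*\<theta>/K"
        using fine_bound[OF \<eta>(2) \<eta>(1) K(2) K1(2) N0p M \<epsilon>(1) enM[OF M]] by simp
      finally have bR3: "(\<Sum>j<N. \<bar>R (node N (Suc j)) - R (node N j)\<bar>) \<le> 2*\<epsilon> + \<epsilon> + \<theta>/(2*\<epsilon>) + 6*\<theta>/K" .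
      have t1: "\<theta>/(2*\<epsilon>) = \<epsilon>/2" using \<epsilon> by (simp add: \<theta>_def power2_eq_square)
      have t2: "6*\<theta>/K \<le> \<epsilon>"
      proof -
        have "6*\<theta>/K \<le> 6*\<theta>" using K \<theta> by (simp add: divide_le_eq)
        also have "\<dots> = (6*\<epsilon>) * \<epsilon>" by (simp add: \<theta>_def power2_eq_square)
        also have "\<dots> \<le> 1 * \<epsilon>" using \<epsilon> by (intro mult_right_mono) auto
        finally show ?thesis by simp
      qed
      have "\<bar>\<Sum>k<m. (-1::real)^k * (F (a + real (Suc k) * \<delta>) - F (a + real k * \<delta>))\<bar> \<le> 
          2*\<epsilon> + \<epsilon> + \<epsilon>/2 + \<epsilon> + \<epsilon> + \<epsilon>"
      proof -
        let ?X = "\<Sum>k<m. (-1::real)^k * (R (a + real (Suc k) * \<delta>) - R (a + real k * \<delta>))"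
        let ?Y = "\<Sum>k<m. (-1::real)^k * (L (a + real (Suc k) * \<delta>) - L (a + real k * \<delta>))"
        have "\<bar>?X + ?Y\<bar> \<le> \<bar>?X\<bar> + \<bar>?Y\<bar>" by (rule abs_triangle_ineq)
        then show ?thesis unfolding split using bL bR1 bR2 bR3 t1 t2 m\<omega> by linarith
      qed
      also have "\<dots> \<le> e" using \<epsilon> by linarith
      finally show ?thesis .
    qed
  qed
qed

definition gq :: "(real \<Rightarrow> real) \<Rightarrow> real \<Rightarrow> real \<Rightarrow> real" where
  "gq f x t = (f t - f x) / (t - x)"

lemma gq_integral:
  assumes der: "\<forall>y\<in>{-1..1}. (f has_real_derivative F y) (at y within {-1..1})"
    and x: "-1 \<le> x" "x \<le> 1" and t: "-1 \<le> t" "t \<le> 1" "t \<noteq> x"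
  shows "((\<lambda>s. F (x + s*(t-x))) has_integral gq f x t) {0..1}"
proof -
  define \<psi> where "\<psi> s = x + s*(t-x)" for s
  have \<psi>r: "\<psi> s \<in> {-1..1}" if "s \<in> {0..1}" for s
  proof -
    have e: "\<psi> s = (1-s)*x + s*t" by (simp add: \<psi>_def algebra_simps)
    have "(1-s)*x + s*t \<ge> (1-s)*(-1) + s*(-1)" using that x t by (intro add_mono mult_left_mono) auto
    moreover have "(1-s)*x + s*t \<le> (1-s)*1 + s*1" using that x t by (intro add_mono mult_left_mono) auto
    ultimately show ?thesis using e by (simp add: algebra_simps)
  qed
  have img: "\<psi> ` {0..1} \<subseteq> {-1..1}" by (rule image_subsetI) (rule \<psi>r)
  have d: "((f \<circ> \<psi>) has_vector_derivative (F (\<psi> s) * (t - x))) (at s within {0..1})" if "s \<in> {0..1}" for s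
  proof -
    have "(f has_real_derivative F (\<psi> s)) (at (\<psi> s) within {-1..1})" using der \<psi>r[OF that] by blast
    then have f1: "(f has_real_derivative F (\<psi> s)) (at (\<psi> s) within \<psi> ` {0..1})" by (rule DERIV_subset[OF _ img])
    have p1: "(\<psi> has_real_derivative (t - x)) (at s within {0..1})"
      unfolding \<psi>_def by (auto intro!: derivative_eq_intros)
    show ?thesis using DERIV_image_chain[OF f1 p1] by (simp add: has_real_derivative_iff_has_vector_derivative)
  qed
  have "((\<lambda>s. F (\<psi> s) * (t - x)) has_integral ((f \<circ> \<psi>) 1 - (f \<circ> \<psi>) 0)) {0..1}"
    by (rule fundamental_theorem_of_calculus[of 0 1 "f \<circ> \<psi>" "\<lambda>s. F (\<psi> s) * (t - x)"]) (use d in auto)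
  then have "((\<lambda>s. 1/(t-x) * (F (\<psi> s) * (t - x))) has_integral (1/(t-x)) * ((f \<circ> \<psi>) 1 - (f \<circ> \<psi>) 0)) {0..1}"
    by (rule has_integral_mult_right)
  moreover have "(\<lambda>s. 1/(t-x) * (F (\<psi> s) * (t - x))) = (\<lambda>s. F (x + s*(t-x)))"
    using t by (auto simp: \<psi>_def)
  moreover have "(1/(t-x)) * ((f \<circ> \<psi>) 1 - (f \<circ> \<psi>) 0) = gq f x t"
    by (simp add: \<psi>_def gq_def)
  ultimately show ?thesis by simp
qed

lemma T_bound:
  assumes "AC1 f"
  shows "\<forall>e>0. \<exists>N0. \<forall>n\<ge>N0. \<forall>x. -1 < x \<longrightarrow> x < 1 \<longrightarrow> (\<forall>k\<le>n. x \<noteq> node n k) \<longrightarrow>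
     \<bar>\<Sum>k<n. (-1::real)^k * (gq f x (node n (Suc k)) - gq f x (node n k))\<bar> \<le> e"
proof (intro allI impI)
  fix e :: real assume e: "e > 0"
  obtain F where der: "\<forall>y\<in>{-1..1}. (f has_real_derivative F y) (at y within {-1..1})"
    and ac: "abs_cont_on {-1..1} F" using assms unfolding AC1_def by blast
  obtain \<delta>0 where \<delta>0: "\<delta>0 > 0" and A: "\<forall>a \<delta> m. 0 \<le> \<delta> \<longrightarrow> \<delta> \<le> \<delta>0 \<longrightarrow> -1 \<le> a \<longrightarrow> a + real m * \<delta> \<le> 1 \<longrightarrow>
     \<bar>\<Sum>k<m. (-1::real)^k * (F (a + real (Suc k) * \<delta>) - F (a + real k * \<delta>))\<bar> \<le> e"
    using altsum_small[OF ac e] by blast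
  define N0 where "N0 = nat \<lceil>2/\<delta>0\<rceil> + 1"
  show "\<exists>N0. \<forall>n\<ge>N0. \<forall>x. -1 < x \<longrightarrow> x < 1 \<longrightarrow> (\<forall>k\<le>n. x \<noteq> node n k) \<longrightarrow>
     \<bar>\<Sum>k<n. (-1::real)^k * (gq f x (node n (Suc k)) - gq f x (node n k))\<bar> \<le> e"
  proof (intro exI[of _ N0] allI impI)
    fix n x assume n: "n \<ge> N0" and x: "-1 < x" "x < 1" and nn: "\<forall>k\<le>n. x \<noteq> node n k"
    have "2/\<delta>0 \<le> real (nat \<lceil>2/\<delta>0\<rceil>)" by (rule real_nat_ceiling_ge)
    moreover have "real (nat \<lceil>2/\<delta>0\<rceil>) < real n" using n unfolding N0_def by linarith
    ultimately have nr: "real n > 2/\<delta>0" by linarith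
    have npos: "n > 0" using nr \<delta>0 by (metis divide_pos_pos of_nat_0_less_iff order_less_trans zero_less_numeral)
    have h: "2 / real n \<le> \<delta>0" using nr \<delta>0 npos by (simp add: field_simps)
    define I where "I s = (\<Sum>k<n. (-1::real)^k * (F (x + s*(node n (Suc k) - x)) - F (x + s*(node n k - x))))" for s
    have int: "(I has_integral (\<Sum>k<n. (-1::real)^k * (gq f x (node n (Suc k)) - gq f x (node n k)))) {0..1}"
      unfolding I_def
    proof (intro has_integral_sum has_integral_mult_right has_integral_diff)
      fix k assume k: "k \<in> {..<n}"
      have r1: "-1 \<le> node n (Suc k) \<and> node n (Suc k) \<le> 1" using node_range[OF npos] k by simp
      have r2: "-1 \<le> node n k \<and> node n k \<le> 1" using node_range[OF npos] k by simp
      show "((\<lambda>s. F (x + s * (node n (Suc k) - x))) has_integral gq f x (node n (Suc k))) {0..1}"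
        using gq_integral[OF der _ _ _ _ nn[rule_format, of "Suc k", symmetric]] r1 x k by auto
      show "((\<lambda>s. F (x + s * (node n k - x))) has_integral gq f x (node n k)) {0..1}"
        using gq_integral[OF der _ _ _ _ nn[rule_format, of k, symmetric]] r2 x k by auto
    qed simp
    have bnd: "norm (I s) \<le> e" if s: "s \<in> {0..1}" for s
    proof -
      define a where "a = x - s*(1+x)"
      define \<delta> where "\<delta> = 2 * s / real n"
      have pt: "x + s*(node n k - x) = a + real k * \<delta>" for k
        using npos by (simp add: a_def \<delta>_def node_def field_simps)
      have d0: "0 \<le> \<delta>" using s by (simp add: \<delta>_def)
      have d1: "\<delta> \<le> \<delta>0"
      proof -
        have "\<delta> \<le> 2/real n" using s npos by (simp add: \<delta>_def divide_right_mono)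
        then show ?thesis using h by linarith
      qed
      have a1: "-1 \<le> a"
      proof -
        have "(1-s)*x \<ge> (1-s)*(-1)" using s x by (intro mult_left_mono) auto
        then show ?thesis by (simp add: a_def algebra_simps)
      qed
      have a2: "a + real n * \<delta> \<le> 1"
      proof -
        have "a + real n * \<delta> = (1-s)*x + s" using npos by (simp add: a_def \<delta>_def field_simps)
        moreover have "(1-s)*x \<le> (1-s)*1" using s x by (intro mult_left_mono) auto
        ultimately show ?thesis by simp
      qed
      have "I s = (\<Sum>k<n. (-1::real)^k * (F (a + real (Suc k) * \<delta>) - F (a + real k * \<delta>)))"
        unfolding I_def pt by simp
      then show ?thesis using A[rule_format, OF d0 d1 a1 a2] by simp
    qed
    have "norm (\<Sum>k<n. (-1::real)^k * (gq f x (node n (Suc k)) - gq f x (node n k))) \<le> e"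
      using has_integral_bound_real[OF _ _ int, of e "{}"] e bnd by simp
    then show "\<bar>\<Sum>k<n. (-1::real)^k * (gq f x (node n (Suc k)) - gq f x (node n k))\<bar> \<le> e" by simp
  qed
qed

lemma altS:
  assumes h: "h > 0"
  shows "\<And>d. d > 0 \<Longrightarrow> 0 \<le> (-1::real)^j * (\<Sum>k<Suc j. (-1)^k / (d + (real j - real k) * h))
     \<and> (-1::real)^j * (\<Sum>k<Suc j. (-1)^k / (d + (real j - real k) * h)) \<le> 1/d
     \<and> (-1::real)^j * (\<Sum>k<Suc j. (-1)^k / (d + (real j - real k) * h)) \<ge> 1/d - 1/(d+h)"
proof (induction j)
  case (0 d)
  have "1/(d+h) > 0" using 0 h by simp
  then show ?case using 0 by simp
next
  case (Suc j d)
  have dh: "d + h > 0" using Suc.prems h by simp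
  note IH = Suc.IH[OF dh]
  let ?S = "(-1::real)^j * (\<Sum>k<Suc j. (-1)^k / ((d+h) + (real j - real k) * h))"
  have eq: "(-1::real)^(Suc j) * (\<Sum>k<Suc (Suc j). (-1)^k / (d + (real (Suc j) - real k) * h)) = 1/d - ?S"
  proof -
    have "(\<Sum>k<Suc (Suc j). (-1::real)^k / (d + (real (Suc j) - real k) * h))
        = (\<Sum>k<Suc j. (-1)^k / ((d+h) + (real j - real k) * h)) + (-1)^(Suc j) / d"
      by (simp add: algebra_simps)
    then show ?thesis by (simp add: algebra_simps)
  qed
  have "1/(d+h) \<le> 1/d" using Suc.prems h by (simp add: frac_le)
  then show ?case unfolding eq using IH Suc.prems by auto
qed

lemma altR:
  assumes h: "h > 0"
  shows "\<And>e. e > 0 \<Longrightarrow> 0 \<le> (\<Sum>i<Suc m. (-1::real)^i / (e + real i * h))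
     \<and> (\<Sum>i<Suc m. (-1::real)^i / (e + real i * h)) \<le> 1/e
     \<and> (\<Sum>i<Suc m. (-1::real)^i / (e + real i * h)) \<ge> 1/e - 1/(e+h)"
proof (induction m)
  case (0 e)
  have "1/(e+h) > 0" using 0 h by simp
  then show ?case using 0 by simp
next
  case (Suc m e)
  have eh: "e + h > 0" using Suc.prems h by simp
  note IH = Suc.IH[OF eh]
  have eq: "(\<Sum>i<Suc (Suc m). (-1::real)^i / (e + real i * h)) = 1/e - (\<Sum>i<Suc m. (-1::real)^i / ((e+h) + real i * h))"
  proof -
    have "(\<Sum>i<Suc (Suc m). (-1::real)^i / (e + real i * h)) = 1/e + (\<Sum>i<Suc m. (-1::real)^(Suc i) / (e + real (Suc i) * h))"
      by (subst sum.lessThan_Suc_shift) simp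
    also have "(\<Sum>i<Suc m. (-1::real)^(Suc i) / (e + real (Suc i) * h)) = - (\<Sum>i<Suc m. (-1::real)^i / ((e+h) + real i * h))"
      by (simp add: sum_negf[symmetric] algebra_simps)
    finally show ?thesis by simp
  qed
  have "1/(e+h) \<le> 1/e" using Suc.prems h by (simp add: frac_le)
  then show ?case unfolding eq using IH Suc.prems by auto
qed

lemma Dn_lower:
  assumes n: "n > 0" and x: "-1 < x" "x < 1" and nn: "\<forall>k\<le>n. x \<noteq> node n k"
  shows "\<bar>Dn n x\<bar> \<ge> real n / 2"
proof -
  define h where "h = 2 / real n"
  have h: "h > 0" using n by (simp add: h_def)
  have g: "node n k = real k * h - 1" for k by (simp add: node_def h_def)
  define j where "j = nat \<lfloor>(x+1)/h\<rfloor>"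
  have rj: "real j = real_of_int \<lfloor>(x+1)/h\<rfloor>" using x h by (simp add: j_def)
  have jl: "node n j \<le> x"
  proof -
    have "real j \<le> (x+1)/h" using rj by simp
    then have "real j * h \<le> x + 1" using h by (simp add: field_simps)
    then show ?thesis by (simp add: g)
  qed
  have ju: "x < node n (Suc j)"
  proof -
    have "(x+1)/h < real j + 1" using rj floor_correct[of "(x+1)/h"] by linarith
    then have "x + 1 < (real j + 1) * h" using h by (simp add: field_simps)
    then show ?thesis by (simp add: g algebra_simps)
  qed
  have jn: "j < n"
  proof (rule ccontr)
    assume "\<not> j < n"
    then have "node n n \<le> node n j" by (intro node_mono[OF n]) simp
    then show False using jl x n by simp
  qed
  have "x \<noteq> node n j" using nn jn by simp
  then have jne: "node n j \<noteq> x" by simp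
  define d where "d = x - node n j"
  define e where "e = node n (Suc j) - x"
  have d: "d > 0" using jl jne by (simp add: d_def)
  have e: "e > 0" using ju by (simp add: e_def)
  have de: "d + e = h" using node_Suc[OF n, of j] by (simp add: d_def e_def h_def)
  define S where "S = (-1::real)^j * (\<Sum>k<Suc j. (-1)^k / (d + (real j - real k) * h))"
  define R where "R = (\<Sum>i<Suc (n - Suc j). (-1::real)^i / (e + real i * h))"
  note SS = altS[OF h d, of j, folded S_def]
  note RR = altR[OF h e, of "n - Suc j", folded R_def]
  have left: "(\<Sum>k<Suc j. (-1::real)^k / (x - node n k)) = (-1)^j * S"
  proof -
    have "x - node n k = d + (real j - real k) * h" for k by (simp add: d_def g algebra_simps)
    then show ?thesis by (simp add: S_def)
  qed
  have right: "(\<Sum>i<n - j. (-1::real)^(Suc j + i) / (x - node n (Suc j + i))) = (-1)^j * R"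
  proof -
    have nj: "n - j = Suc (n - Suc j)" using jn by simp
    have t: "(-1::real)^(Suc j + i) / (x - node n (Suc j + i)) = (-1)^j * ((-1)^i / (e + real i * h))" for i
    proof -
      have a: "x - node n (Suc j + i) = - (e + real i * h)" by (simp add: e_def g algebra_simps)
      have b: "(-1::real)^(Suc j + i) = - ((-1)^j * (-1)^i)" by (simp add: power_add)
      show ?thesis unfolding a b minus_divide_divide by simp
    qed
    show ?thesis unfolding nj t R_def by (rule sum_distrib_left[symmetric])
  qed
  have "Dn n x = (\<Sum>k<Suc j + (n - j). (-1::real)^k / (x - node n k))"
    unfolding Dn_def using jn by (simp add: atLeast0AtMost lessThan_Suc_atMost[symmetric])
  also have "\<dots> = (\<Sum>k<Suc j. (-1::real)^k / (x - node n k)) + (\<Sum>i<n - j. (-1::real)^(Suc j + i) / (x - node n (Suc j + i)))"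
    by (rule sum_lessThan_add)
  also have "\<dots> = (-1)^j * (S + R)" unfolding left right by (simp add: algebra_simps)
  finally have "\<bar>Dn n x\<bar> = S + R" using SS RR by (simp add: abs_mult)
  moreover have "S + R \<ge> 1/h"
  proof (cases "d \<le> h/2")
    case True
    have "1/d \<ge> 2/h" using True d h by (simp add: field_simps)
    moreover have "1/(d+h) \<le> 1/h" using d h by (simp add: frac_le)
    ultimately show ?thesis using SS RR by linarith
  next
    case False
    then have "e \<le> h/2" using de by simp
    then have "1/e \<ge> 2/h" using e h by (simp add: field_simps)
    moreover have "1/(e+h) \<le> 1/h" using e h by (simp add: frac_le)
    ultimately show ?thesis using SS RR by linarith
  qed
  moreover have "1/h = real n / 2" by (simp add: h_def)
  ultimately show ?thesis by simp
qed

lemma sumS_identity: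
  "2 * (\<Sum>k<Suc n. (-1::real)^k * g k) = g 0 + (-1)^n * g n - (\<Sum>k<n. (-1)^k * (g (Suc k) - g k))"
  by (induction n) (auto simp: algebra_simps)

definition Tf :: "(real \<Rightarrow> real) \<Rightarrow> nat \<Rightarrow> real \<Rightarrow> real" where
  "Tf f n x = (\<Sum>k<n. (-1::real)^k * (gq f x (node n (Suc k)) - gq f x (node n k)))"

lemma num_eq:
  assumes n: "n > 0" and x: "-1 < x" "x < 1" and nn: "\<forall>k\<le>n. x \<noteq> node n k"
  shows "Nn n f x - f x * Dn n x = - (\<Sum>k<Suc n. (-1::real)^k * gq f x (node n k))"
proof -
  have t: "(-1::real)^k * f (node n k) / (x - node n k) - f x * ((-1)^k / (x - node n k)) = - ((-1)^k * gq f x (node n k))"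
    if "k \<le> n" for k
  proof -
    have 1: "(-1::real)^k * f (node n k) / (x - node n k) - f x * ((-1)^k / (x - node n k))
        = (-1)^k * ((f (node n k) - f x) / (x - node n k))"
      by (simp add: diff_divide_distrib algebra_simps)
    have e: "node n k - x = - (x - node n k)" by simp
    have 2: "gq f x (node n k) = - ((f (node n k) - f x) / (x - node n k))"
      unfolding gq_def e by (rule divide_minus_right)
    show ?thesis unfolding 1 2 by simp
  qed
  have "Nn n f x - f x * Dn n x = (\<Sum>k<Suc n. (-1::real)^k * f (node n k) / (x - node n k) - f x * ((-1)^k / (x - node n k)))"
    unfolding Nn_def Dn_def by (simp add: atLeast0AtMost lessThan_Suc_atMost sum_subtractf sum_distrib_left)
  also have "\<dots> = (\<Sum>k<Suc n. - ((-1::real)^k * gq f x (node n k)))" using t by (intro sum.cong) auto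
  finally show ?thesis by (simp add: sum_negf)
qed

lemma gq1: "x < 1 \<Longrightarrow> gq f x 1 = (f x - f 1) / (x - 1)"
proof -
  assume "x < 1"
  have e: "1 - x = - (x - 1)" by simp
  have e2: "f 1 - f x = - (f x - f 1)" by simp
  show ?thesis unfolding gq_def e e2 minus_divide_divide ..
qed

lemma gqm1: "-1 < x \<Longrightarrow> gq f x (-1) = (f x - f (-1)) / (x + 1)"
proof -
  assume "-1 < x"
  have e: "-1 - x = - (x + 1)" by simp
  have e2: "f (-1) - f x = - (f x - f (-1))" by simp
  show ?thesis unfolding gq_def e e2 minus_divide_divide ..
qed

lemma O_eq: "-1 < x \<Longrightarrow> x < 1 \<Longrightarrow> Ofun f x = (gq f x 1 - gq f x (-1)) / 2"
proof -
  assume a: "-1 < x" "x < 1"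
  have n1: "x - 1 \<noteq> 0" "x + 1 \<noteq> 0" using a by auto
  show ?thesis unfolding Ofun_def gq1[OF a(2)] gqm1[OF a(1)] by (simp add: diff_divide_distrib divide_divide_eq_left mult.commute)
qed

lemma E_eq: "-1 < x \<Longrightarrow> x < 1 \<Longrightarrow> Efun f x = - (gq f x 1 + gq f x (-1)) / 2"
proof -
  assume a: "-1 < x" "x < 1"
  have n1: "x - 1 \<noteq> 0" "x + 1 \<noteq> 0" using a by auto
  have "(f 1 - f x) / (2 * (x - 1)) = - ((f x - f 1) / (x - 1)) / 2"
    using n1 by (simp add: field_simps)
  moreover have "(f (-1) - f x) / (2 * (x + 1)) = - ((f x - f (-1)) / (x + 1)) / 2"
    using n1 by (simp add: field_simps)
  ultimately show ?thesis using a by (simp add: Efun_def gq1 gqm1 diff_divide_distrib add_divide_distrib)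
qed

lemma err_bound:
  assumes n: "n > 0" and x: "-1 < x" "x < 1" and nn: "\<forall>k\<le>n. x \<noteq> node n k"
    and G: "(odd n \<and> G = Ofun f x) \<or> (even n \<and> G = Efun f x)"
  shows "\<bar>Bn n f x - f x - G / Dn n x\<bar> \<le> \<bar>Tf f n x\<bar> / real n"
proof -
  have Dl: "\<bar>Dn n x\<bar> \<ge> real n / 2" by (rule Dn_lower[OF n x nn])
  have D0: "Dn n x \<noteq> 0" using Dl n by auto
  have Bn: "Bn n f x = Nn n f x / Dn n x" using nn by (auto simp: Bn_def)
  define g where "g k = gq f x (node n k)" for k
  define S where "S = (\<Sum>k<Suc n. (-1::real)^k * g k)"
  have g0: "g 0 = gq f x (-1)" using n by (simp add: g_def)
  have gn: "g n = gq f x 1" using n by (simp add: g_def)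
  have T: "Tf f n x = (\<Sum>k<n. (-1)^k * (g (Suc k) - g k))" by (simp add: Tf_def g_def)
  have idS: "2 * S = g 0 + (-1)^n * g n - Tf f n x" unfolding S_def T by (rule sumS_identity)
  have num: "Nn n f x - f x * Dn n x - G = Tf f n x / 2"
  proof -
    have ne: "Nn n f x - f x * Dn n x = - S" using num_eq[OF n x nn] by (simp add: S_def g_def)
    from G show ?thesis
    proof
      assume a: "odd n \<and> G = Ofun f x"
      then have "(-1::real)^n = -1" by simp
      then show ?thesis using ne idS a O_eq[OF x, of f] g0 gn by (simp add: field_simps)
    next
      assume a: "even n \<and> G = Efun f x"
      then have "(-1::real)^n = 1" by simp
      then show ?thesis using ne idS a E_eq[OF x, of f] g0 gn by (simp add: field_simps)
    qed
  qed
  have "Bn n f x - f x - G / Dn n x = (Nn n f x - f x * Dn n x - G) / Dn n x"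
    unfolding Bn using D0 by (simp add: field_simps)
  also have "\<dots> = (Tf f n x / 2) / Dn n x" by (simp add: num)
  finally have e: "\<bar>Bn n f x - f x - G / Dn n x\<bar> = (\<bar>Tf f n x\<bar> / 2) / \<bar>Dn n x\<bar>" by (simp add: abs_div abs_mult)
  also have "\<dots> \<le> (\<bar>Tf f n x\<bar> / 2) / (real n / 2)"
    using Dl n by (intro divide_left_mono) auto
  also have "\<dots> = \<bar>Tf f n x\<bar> / real n" by simp
  finally show ?thesis .
qed

lemma supnorm_nonneg:
  assumes n: "n \<ge> 1" shows "0 \<le> supnorm n g"
proof -
  define x0 where "x0 = -1 + 1/real n"
  have x0: "-1 < x0" "x0 < 1" using n by (auto simp: x0_def field_simps)
  have "x0 \<noteq> node n k" for k
  proof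
    assume "x0 = node n k"
    then have "1/real n = 2 * real k / real n" by (simp add: x0_def node_def)
    then have "1 = 2 * real k" using n by (simp add: field_simps)
    then have "(1::nat) = 2 * k" by linarith
    then show False by presburger
  qed
  then have "x0 \<in> {x. -1 < x \<and> x < 1 \<and> (\<forall>k\<le>n. x \<noteq> node n k)}" using x0 by auto
  then have "ereal \<bar>g x0\<bar> \<le> supnorm n g" unfolding supnorm_def by (rule SUP_upper)
  moreover have "0 \<le> ereal \<bar>g x0\<bar>" by simp
  ultimately show ?thesis by (rule order_trans[rotated])
qed

lemma supnorm_le:
  assumes "\<And>x. -1 < x \<Longrightarrow> x < 1 \<Longrightarrow> (\<forall>k\<le>n. x \<noteq> node n k) \<Longrightarrow> \<bar>g x\<bar> \<le> B"
  shows "supnorm n g \<le> ereal B"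
  unfolding supnorm_def by (rule SUP_least) (use assms in auto)

lemma limit_generic:
  assumes Tb: "\<forall>e>0. \<exists>N0. \<forall>n\<ge>N0. \<forall>x. -1 < x \<longrightarrow> x < 1 \<longrightarrow> (\<forall>k\<le>n. x \<noteq> node n k) \<longrightarrow> \<bar>Tf f n x\<bar> \<le> e"
    and sm: "strict_mono nj"
    and eq: "\<And>j x. j \<ge> 1 \<Longrightarrow> -1 < x \<Longrightarrow> x < 1 \<Longrightarrow> (\<forall>k\<le>nj j. x \<noteq> node (nj j) k) \<Longrightarrow>
        \<bar>G (nj j) x\<bar> \<le> \<bar>Tf f (nj j) x\<bar> / real (nj j)"
  shows "(\<lambda>j. ereal (real (nj j)) * supnorm (nj j) (G (nj j))) \<longlonglongrightarrow> 0"
proof (rule order_tendstoI)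
  have nj1: "nj j \<ge> 1" if "j \<ge> 1" for j using seq_suble[OF sm, of j] that by simp
  have nonneg: "0 \<le> ereal (real (nj j)) * supnorm (nj j) (G (nj j))" if "j \<ge> 1" for j
  proof -
    have "ereal (real (nj j)) * 0 \<le> ereal (real (nj j)) * supnorm (nj j) (G (nj j))"
      by (rule ereal_mult_left_mono[OF supnorm_nonneg[OF nj1[OF that]]]) simp
    then show ?thesis by simp
  qed
  fix a :: ereal
  {
    assume "a < 0"
    then show "\<forall>\<^sub>F j in sequentially. a < ereal (real (nj j)) * supnorm (nj j) (G (nj j))"
      using nonneg by (intro eventually_sequentiallyI[of 1]) (auto intro: order.strict_trans2)
  }
  {
    assume a: "0 < a"
    obtain z where z: "0 < ereal z" "ereal z < a" using ereal_dense2[OF a] by blast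
    have z0: "z > 0" using z by simp
    obtain N0 where N0: "\<forall>n\<ge>N0. \<forall>x. -1 < x \<longrightarrow> x < 1 \<longrightarrow> (\<forall>k\<le>n. x \<noteq> node n k) \<longrightarrow> \<bar>Tf f n x\<bar> \<le> z/2"
      using Tb z0 by (meson half_gt_zero)
    show "\<forall>\<^sub>F j in sequentially. ereal (real (nj j)) * supnorm (nj j) (G (nj j)) < a"
    proof (intro eventually_sequentiallyI[of "max 1 N0"])
      fix j assume j: "max 1 N0 \<le> j"
      have j1: "j \<ge> 1" and jN: "nj j \<ge> N0" using j seq_suble[OF sm, of j] by auto
      have np: "real (nj j) > 0" using nj1[OF j1] by simp
      have "supnorm (nj j) (G (nj j)) \<le> ereal ((z/2) / real (nj j))"
      proof (rule supnorm_le)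
        fix x assume x: "-1 < x" "x < 1" "\<forall>k\<le>nj j. x \<noteq> node (nj j) k"
        have "\<bar>G (nj j) x\<bar> \<le> \<bar>Tf f (nj j) x\<bar> / real (nj j)" by (rule eq[OF j1 x])
        also have "\<dots> \<le> (z/2) / real (nj j)" using N0 jN x np by (intro divide_right_mono) auto
        finally show "\<bar>G (nj j) x\<bar> \<le> (z/2) / real (nj j)" .
      qed
      then have "ereal (real (nj j)) * supnorm (nj j) (G (nj j)) \<le> ereal (real (nj j)) * ereal ((z/2) / real (nj j))"
        by (rule ereal_mult_left_mono) simp
      also have "\<dots> = ereal (z/2)" using np by simp
      also have "\<dots> < ereal z" using z0 by simp
      finally show "ereal (real (nj j)) * supnorm (nj j) (G (nj j)) < a" using z(2) by simp
    qed
  }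
qed

theorem theorem2:
  fixes f :: "real \<Rightarrow> real" and nj :: "nat \<Rightarrow> nat"
  assumes "AC1 f" and "strict_mono nj"
  shows "((\<forall>j. odd (nj j)) \<longrightarrow>
           (\<lambda>j. ereal (real (nj j)) *
              supnorm (nj j) (\<lambda>x. Bn (nj j) f x - f x - Ofun f x / Dn (nj j) x))
           \<longlonglongrightarrow> 0)
       \<and> ((\<forall>j. even (nj j)) \<longrightarrow>
           (\<lambda>j. ereal (real (nj j)) *
              supnorm (nj j) (\<lambda>x. Bn (nj j) f x - f x - Efun f x / Dn (nj j) x))
           \<longlonglongrightarrow> 0)"
proof -
  have Tb: "\<forall>e>0. \<exists>N0. \<forall>n\<ge>N0. \<forall>x. -1 < x \<longrightarrow> x < 1 \<longrightarrow> (\<forall>k\<le>n. x \<noteq> node n k) \<longrightarrow> \<bar>Tf f n x\<bar> \<le> e"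
    using T_bound[OF assms(1)] unfolding Tf_def .
  have nj1: "nj j \<ge> 1" if "j \<ge> 1" for j using seq_suble[OF assms(2), of j] that by simp
  show ?thesis
  proof (intro conjI impI)
    assume od: "\<forall>j. odd (nj j)"
    show "(\<lambda>j. ereal (real (nj j)) *
              supnorm (nj j) (\<lambda>x. Bn (nj j) f x - f x - Ofun f x / Dn (nj j) x)) \<longlonglongrightarrow> 0"
    proof (rule limit_generic[OF Tb assms(2), where G="\<lambda>n x. Bn n f x - f x - Ofun f x / Dn n x"])
      fix j x assume j1: "1 \<le> j" and x1: "-1 < x" and x2: "x < 1" and nn: "\<forall>k\<le>nj j. x \<noteq> node (nj j) k"
      have "nj j > 0" using nj1[OF j1] by simp
      then show "\<bar>Bn (nj j) f x - f x - Ofun f x / Dn (nj j) x\<bar> \<le> \<bar>Tf f (nj j) x\<bar> / real (nj j)"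
        by (rule err_bound[OF _ x1 x2 nn]) (use od in blast)
    qed
  next
    assume ev: "\<forall>j. even (nj j)"
    show "(\<lambda>j. ereal (real (nj j)) *
              supnorm (nj j) (\<lambda>x. Bn (nj j) f x - f x - Efun f x / Dn (nj j) x)) \<longlonglongrightarrow> 0"
    proof (rule limit_generic[OF Tb assms(2), where G="\<lambda>n x. Bn n f x - f x - Efun f x / Dn n x"])
      fix j x assume j1: "1 \<le> j" and x1: "-1 < x" and x2: "x < 1" and nn: "\<forall>k\<le>nj j. x \<noteq> node (nj j) k"
      have "nj j > 0" using nj1[OF j1] by simp
      then show "\<bar>Bn (nj j) f x - f x - Efun f x / Dn (nj j) x\<bar> \<le> \<bar>Tf f (nj j) x\<bar> / real (nj j)"
        by (rule err_bound[OF _ x1 x2 nn]) (use ev in blast)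
    qed
  qed
qed

end
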